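(* The contracting arborification $\mathfrak a:\mathcal H^\Omega_<\to\mathcal H^\Omega$ intertwines the internal coproducts: $\Gamma\circ\mathfrak a=(\mathfrak a\otimes\mathfrak a)\circ\Gamma$, where $\Gamma$ on the left is the decomposition coproduct on words and $\Gamma$ on the right is the extraction-contraction coproduct on decorated forests.
   Context: Let $\bm k$ be a field, $\Omega$ a set with a commutative semigroup law written additively ($[a+b]$ the sum), $\Omega^*$ the words on $\Omega$ with empty word $\mathbf 1$, $\|\bm\omega\|=[\omega_1+\cdots+\omega_n]$ the weight of a nonempty word, and $\mathcal H^\Omega$ the $\bm k$-span of $\Omega^*$ with quasi-shuffle product $\star$ ($\mathbf 1\star\bm\omega=\bm\omega\star\mathbf 1=\bm\omega$, $a\bm u\star b\bm v=a(\bm u\star b\bm v)+b(a\bm u\star\bm v)+[a+b](\bm u\star\bm v)$). Word coproduct: $\Gamma(\mathbf 1)=\mathbf 1\otimes\mathbf 1$, and for $\bm\omega\ne\mathbf 1$, $\Gamma(\bm\omega)=\sum_{s\ge1}\sum_{\bm\omega=\bm\omega^1\cdots\bm\omega^s}\|\bm\omega^1\|\cdots\|\bm\omega^s\|\otimes\bm\omega^1\star\cdots\star\bm\omega^s$ (pieces nonempty; $\|\bm\omega^1\|\cdots\|\bm\omega^s\|$ the word of their weights). A rooted forest is a finite directed acyclic graph in which each vertex has at most one incoming edge; its vertex set $\mathcal V(F)$ is partially ordered by $u\le v$ iff there is a directed path from a root (vertex without incoming edge) to $v$ through $u$. An $\Omega$-decorated forest carries a map $d:\mathcal V(F)\to\Omega$.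 $\mathcal H^\Omega_<$ is the $\bm k$-span of (isomorphism classes of) $\Omega$-decorated rooted forests, a commutative algebra under disjoint union with unit the empty forest $\mathbf 1$. A covering subforest $G$ of $F$ is a partition of $\mathcal V(F)$ into blocks each inducing a connected subgraph, identified with the decorated forest obtained from $F$ by keeping only the edges inside blocks; $F/G$ is the decorated forest obtained by contracting each block to a single vertex decorated by the $\Omega$-sum of the decorations of the block. Forest coproduct: $\Gamma(F)=\sum_{G}F/G\otimes G$, over all covering subforests $G$ of $F$ (with $\Gamma(\mathbf 1)=\mathbf 1\otimes\mathbf 1$). For a surjection $\sigma:\mathcal V(F)\to\{1,\ldots,s\}$, $F^\sigma$ denotes the word $F^\sigma_1\cdots F^\sigma_s$ with $F^\sigma_j=[\sum_{\sigma(v)=j}d(v)]$. The contracting arborification is the linear map $\mathfrak a:\mathcal H^\Omega_<\to\mathcal H^\Omega$ with $\mathfrak a(\mathbf 1)=\mathbf 1$ and $\mathfrak a(F)=\sum_{s\ge1}\sum_{\sigma}F^\sigma$ for nonempty $F$, the inner sum over surjections $\sigma:\mathcal V(F)\to\{1,\ldots,s\}$ such that $u<v$ implies $\sigma(u)<\sigma(v)$. *)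

theory Defs
  imports "HOL-Library.Multiset" "HOL-Library.Disjoint_Sets"
begin

text \<open>Elements of the k-span of words are represented by their coefficients; all coefficients
  occurring here are natural numbers, so we compute with multisets and cast counts into k.\<close>

fun wt :: "'a::ab_semigroup_add list \<Rightarrow> 'a" where
  "wt [a] = a"
| "wt (a # b # u) = a + wt (b # u)"
| "wt [] = undefined"

fun qsh :: "'a::ab_semigroup_add list \<Rightarrow> 'a list \<Rightarrow> 'a list multiset" where
  "qsh [] v = {#v#}"
| "qsh u [] = {#u#}"
| "qsh (a # u) (b # v) =
     image_mset ((#) a) (qsh u (b # v))
   + image_mset ((#) b) (qsh (a # u) v)
   + image_mset ((#) (a + b)) (qsh u v)"

definition qsh_mm :: "'a::ab_semigroup_add list multiset \<Rightarrow> 'a list multiset \<Rightarrow> 'a list multiset" where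
  "qsh_mm M N = (\<Sum>u\<in>#M. \<Sum>v\<in>#N. qsh u v)"

definition qsh_list :: "'a::ab_semigroup_add list list \<Rightarrow> 'a list multiset" where
  "qsh_list ps = foldr (\<lambda>p acc. qsh_mm {#p#} acc) ps {#[]#}"

text \<open>Tensor products of linear combinations (basis of the tensor product = pairs).\<close>
definition tensor :: "'b multiset \<Rightarrow> 'c multiset \<Rightarrow> ('b \<times> 'c) multiset" where
  "tensor A B = (\<Sum>x\<in>#A. image_mset (Pair x) B)"

text \<open>Word coproduct on a single word. For the empty word the only decomposition is the empty
  one, giving 1 \<otimes> 1; for nonempty words the decompositions have s \<ge> 1 nonempty pieces.\<close>
definition coprod_word :: "'a::ab_semigroup_add list \<Rightarrow> ('a list \<times> 'a list) multiset" where
  "coprod_word w =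
     (\<Sum>ps\<in>{ps. concat ps = w \<and> (\<forall>p\<in>set ps. p \<noteq> [])}.
        image_mset (Pair (map wt ps)) (qsh_list ps))"

definition coprod_words :: "'a::ab_semigroup_add list multiset \<Rightarrow> ('a list \<times> 'a list) multiset" where
  "coprod_words M = (\<Sum>w\<in>#M. coprod_word w)"

type_synonym 'a forest = "nat set \<times> (nat \<times> nat) set \<times> (nat \<Rightarrow> 'a)"

definition is_forest :: "nat set \<Rightarrow> (nat \<times> nat) set \<Rightarrow> bool" where
  "is_forest V E \<longleftrightarrow> finite V \<and> E \<subseteq> V \<times> V \<and> acyclic E \<and>
     (\<forall>u u' v. (u, v) \<in> E \<longrightarrow> (u', v) \<in> E \<longrightarrow> u = u')"

text \<open>Strict forest order: u < v iff u is a proper ancestor of v.\<close>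
definition forest_less :: "(nat \<times> nat) set \<Rightarrow> nat \<Rightarrow> nat \<Rightarrow> bool" where
  "forest_less E u v \<longleftrightarrow> (u, v) \<in> E\<^sup>+"

definition dsum :: "(nat \<Rightarrow> 'a::ab_semigroup_add) \<Rightarrow> nat set \<Rightarrow> 'a" where
  "dsum d S = wt (map d (sorted_list_of_set S))"

definition order_surjs :: "nat set \<Rightarrow> (nat \<times> nat) set \<Rightarrow> nat \<Rightarrow> (nat \<Rightarrow> nat) set" where
  "order_surjs V E s = {\<sigma>. (\<forall>v. v \<notin> V \<longrightarrow> \<sigma> v = 0) \<and> \<sigma> ` V = {1..s} \<and>
      (\<forall>u\<in>V. \<forall>v\<in>V. forest_less E u v \<longrightarrow> \<sigma> u < \<sigma> v)}"

definition sigma_word :: "nat set \<Rightarrow> (nat \<Rightarrow> 'a::ab_semigroup_add) \<Rightarrow> nat \<Rightarrow> (nat \<Rightarrow> nat) \<Rightarrow> 'a list" where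
  "sigma_word V d s \<sigma> = map (\<lambda>j. dsum d {v\<in>V. \<sigma> v = j}) [1..<s+1]"

text \<open>Contracting arborification (surjections onto {1..s}; for s > card V there are none).\<close>
definition arb :: "'a::ab_semigroup_add forest \<Rightarrow> 'a list multiset" where
  "arb F = (case F of (V, E, d) \<Rightarrow>
     if V = {} then {#[]#}
     else (\<Sum>s\<in>{1..card V}. \<Sum>\<sigma>\<in>order_surjs V E s. {#sigma_word V d s \<sigma>#}))"

text \<open>Covering subforests: partitions of V into blocks inducing connected subgraphs.\<close>
definition covering :: "nat set \<Rightarrow> (nat \<times> nat) set \<Rightarrow> nat set set \<Rightarrow> bool" where
  "covering V E P \<longleftrightarrow> partition_on V P \<and>
     (\<forall>B\<in>P. \<forall>x\<in>B. \<forall>y\<in>B. (x, y) \<in> ((E \<inter> B \<times> B) \<union> (E \<inter> B \<times> B)\<inverse>)\<^sup>*)"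

definition subforest :: "'a forest \<Rightarrow> nat set set \<Rightarrow> 'a forest" where
  "subforest F P = (case F of (V, E, d) \<Rightarrow> (V, E \<inter> (\<Union>B\<in>P. B \<times> B), d))"

text \<open>Contraction F/G: each block B becomes the vertex Min B, decorated by the sum over B.\<close>
definition contract :: "'a::ab_semigroup_add forest \<Rightarrow> nat set set \<Rightarrow> 'a forest" where
  "contract F P = (case F of (V, E, d) \<Rightarrow>
     (Min ` P,
      {(Min B, Min B') | B B'. B \<in> P \<and> B' \<in> P \<and> B \<noteq> B' \<and> (\<exists>u\<in>B. \<exists>v\<in>B'. (u, v) \<in> E)},
      (\<lambda>x. dsum d {v\<in>V. \<exists>B\<in>P. v \<in> B \<and> Min B = x})))"

definition coprod_forest :: "'a::ab_semigroup_add forest \<Rightarrow> ('a forest \<times> 'a forest) multiset" where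
  "coprod_forest F = (case F of (V, E, d) \<Rightarrow>
     (\<Sum>P\<in>{P. covering V E P}. {#(contract F P, subforest F P)#}))"

definition arb_tensor :: "('a::ab_semigroup_add forest \<times> 'a forest) multiset \<Rightarrow> ('a list \<times> 'a list) multiset" where
  "arb_tensor M = (\<Sum>(F1, F2)\<in>#M. tensor (arb F1) (arb F2))"

end

theory Submission
  imports Defs
begin



lemma wt_Cons: "xs \<noteq> [] \<Longrightarrow> wt (a # xs) = a + wt xs"
  by (cases xs) auto

lemma wt_map_insort: "xs \<noteq> [] \<Longrightarrow> wt (map d (insort x xs)) = d x + wt (map d xs)"
proof (induction xs)
  case Nil then show ?case by simp
next
  case (Cons y ys)
  show ?case
  proof (cases "ys = []")
    case True then show ?thesis by (auto simp: add.commute)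
  next
    case False
    have ne: "insort x ys \<noteq> []" by (cases ys) auto
    show ?thesis
    proof (cases "x \<le> y")
      case True then show ?thesis using False by (simp add: wt_Cons)
    next
      case nle: False
      have "wt (map d (insort x (y # ys))) = d y + wt (map d (insort x ys))"
        using nle ne by (simp add: wt_Cons)
      also have "\<dots> = d y + (d x + wt (map d ys))" using Cons.IH False by simp
      also have "\<dots> = d x + wt (map d (y # ys))" using False by (simp add: wt_Cons add_ac)
      finally show ?thesis .
    qed
  qed
qed

lemma dsum_single[simp]: "dsum d {x} = d x"
  by (simp add: dsum_def)

lemma dsum_insert:
  assumes "finite S" "S \<noteq> {}" "x \<notin> S"
  shows "dsum d (insert x S) = d x + dsum d S"
proof -
  have "sorted_list_of_set (insert x S) = insort x (sorted_list_of_set S)"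
    using assms by (simp add: sorted_list_of_set_insert)
  moreover have "sorted_list_of_set S \<noteq> []" using assms by simp
  ultimately show ?thesis by (simp add: dsum_def wt_map_insort)
qed

lemma dsum_union:
  assumes "finite A" "A \<noteq> {}" "finite B" "B \<noteq> {}" "A \<inter> B = {}"
  shows "dsum d (A \<union> B) = dsum d A + dsum d B"
  using assms(1,2,5)
proof (induction A rule: finite_ne_induct)
  case (singleton x) then show ?case using assms(3,4) by (simp add: dsum_insert)
next
  case (insert x F)
  have "dsum d (insert x F \<union> B) = dsum d (insert x (F \<union> B))" by simp
  also have "\<dots> = d x + dsum d (F \<union> B)"
    using insert assms(3) by (intro dsum_insert) auto
  also have "\<dots> = d x + (dsum d F + dsum d B)" using insert by auto
  also have "\<dots> = dsum d (insert x F) + dsum d B"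
    using insert by (simp add: dsum_insert add.assoc)
  finally show ?case .
qed

lemma dsum_cong: "(\<And>x. x \<in> S \<Longrightarrow> f x = g x) \<Longrightarrow> dsum f S = dsum g S"
  unfolding dsum_def
  by (cases "finite S") (auto intro!: arg_cong[where f=wt] map_cong)

lemma dsum_UN:
  assumes "finite I" "I \<noteq> {}" "\<And>i. i \<in> I \<Longrightarrow> finite (A i) \<and> A i \<noteq> {}"
    "disjoint_family_on A I"
  shows "dsum d (\<Union>i\<in>I. A i) = dsum (\<lambda>i. dsum d (A i)) I"
  using assms
proof (induction I rule: finite_ne_induct)
  case (singleton x) then show ?case by simp
next
  case (insert x F)
  have df: "disjoint_family_on A F" using insert.prems(2) by (auto simp: disjoint_family_on_def)
  have "dsum d (\<Union>i\<in>insert x F. A i) = dsum d (A x \<union> (\<Union>i\<in>F. A i))" by simp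
  also have "\<dots> = dsum d (A x) + dsum d (\<Union>i\<in>F. A i)"
    using insert.prems insert.hyps
    by (intro dsum_union) (auto simp: disjoint_family_on_def)
  also have "\<dots> = dsum d (A x) + dsum (\<lambda>i. dsum d (A i)) F" using insert df by auto
  also have "\<dots> = dsum (\<lambda>i. dsum d (A i)) (insert x F)"
    using insert.hyps by (simp add: dsum_insert)
  finally show ?case .
qed




definition OSg :: "(nat \<Rightarrow> nat \<Rightarrow> bool) \<Rightarrow> nat set \<Rightarrow> (nat \<times> nat) set \<Rightarrow> (nat \<Rightarrow> nat) set" where
  "OSg R V E = {\<sigma>. (\<forall>v. v \<notin> V \<longrightarrow> \<sigma> v = 0) \<and> \<sigma> ` V = {1..card (\<sigma> ` V)} \<and>
      (\<forall>(u,v)\<in>E. R (\<sigma> u) (\<sigma> v))}"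

definition Er :: "(nat \<times> nat) set \<Rightarrow> nat set \<Rightarrow> (nat \<times> nat) set" where
  "Er E K = E \<inter> K \<times> K"

definition ideal :: "nat set \<Rightarrow> (nat \<times> nat) set \<Rightarrow> nat set \<Rightarrow> bool" where
  "ideal V E K \<longleftrightarrow> K \<subseteq> V \<and> (\<forall>(u,v)\<in>E. v \<in> K \<longrightarrow> u \<in> K)"

definition cutK :: "(nat \<Rightarrow> nat) \<Rightarrow> nat \<Rightarrow> nat set \<Rightarrow> nat set" where
  "cutK \<sigma> m V = {v\<in>V. \<sigma> v \<le> m}"
definition cut1 :: "(nat \<Rightarrow> nat) \<Rightarrow> nat \<Rightarrow> nat set \<Rightarrow> nat \<Rightarrow> nat" where
  "cut1 \<sigma> m V = (\<lambda>v. if v \<in> V \<and> \<sigma> v \<le> m then \<sigma> v else 0)"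
definition cut2 :: "(nat \<Rightarrow> nat) \<Rightarrow> nat \<Rightarrow> nat set \<Rightarrow> nat \<Rightarrow> nat" where
  "cut2 \<sigma> m V = (\<lambda>v. if v \<in> V \<and> m < \<sigma> v then \<sigma> v - m else 0)"
definition glue :: "nat set \<Rightarrow> (nat \<Rightarrow> nat) \<Rightarrow> (nat \<Rightarrow> nat) \<Rightarrow> nat set \<Rightarrow> nat \<Rightarrow> nat" where
  "glue K \<sigma>1 \<sigma>2 V = (\<lambda>v. if v \<in> K then \<sigma>1 v else if v \<in> V then \<sigma>2 v + card (\<sigma>1 ` K) else 0)"

definition goodR :: "(nat \<Rightarrow> nat \<Rightarrow> bool) \<Rightarrow> bool" where
  "goodR R \<longleftrightarrow> (\<forall>a b. R a b \<longrightarrow> a \<le> b) \<and> (\<forall>a b. a < b \<longrightarrow> R a b) \<and> (\<forall>a b c. R (a + c) (b + c) = R a b)"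

lemma goodR_less: "goodR (<)" by (auto simp: goodR_def)
lemma goodR_le: "goodR (\<le>)" by (auto simp: goodR_def)

lemma OSgD:
  assumes "\<sigma> \<in> OSg R V E"
  shows "\<And>v. v \<notin> V \<Longrightarrow> \<sigma> v = 0" "\<sigma> ` V = {1..card (\<sigma> ` V)}"
    "\<And>u v. (u,v) \<in> E \<Longrightarrow> R (\<sigma> u) (\<sigma> v)"
  using assms by (auto simp: OSg_def)

lemma OSg_range: "\<sigma> \<in> OSg R V E \<Longrightarrow> v \<in> V \<Longrightarrow> 1 \<le> \<sigma> v \<and> \<sigma> v \<le> card (\<sigma> ` V)"
  using OSgD(2)[of \<sigma> R V E] by (metis atLeastAtMost_iff image_eqI)

lemma OSg_hit: "\<sigma> \<in> OSg R V E \<Longrightarrow> 1 \<le> j \<Longrightarrow> j \<le> card (\<sigma> ` V) \<Longrightarrow> \<exists>v\<in>V. \<sigma> v = j"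
  using OSgD(2)[of \<sigma> R V E] by (metis atLeastAtMost_iff imageE)

lemma OSgI:
  assumes "\<And>v. v \<notin> V \<Longrightarrow> \<sigma> v = 0" "\<sigma> ` V = {1..s}" "\<And>u v. (u,v) \<in> E \<Longrightarrow> R (\<sigma> u) (\<sigma> v)"
  shows "\<sigma> \<in> OSg R V E" "card (\<sigma> ` V) = s"
  using assms by (auto simp: OSg_def)

lemma cut_props:
  assumes R: "goodR R" and V: "finite V" "E \<subseteq> V \<times> V" and \<sigma>: "\<sigma> \<in> OSg R V E"
    and m: "1 \<le> m" "m \<le> card (\<sigma> ` V)"
  shows "ideal V E (cutK \<sigma> m V)" "cutK \<sigma> m V \<noteq> {}"
    "cut1 \<sigma> m V \<in> OSg R (cutK \<sigma> m V) (Er E (cutK \<sigma> m V))"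
    "card (cut1 \<sigma> m V ` cutK \<sigma> m V) = m"
    "cut2 \<sigma> m V \<in> OSg R (V - cutK \<sigma> m V) (Er E (V - cutK \<sigma> m V))"
    "card (cut2 \<sigma> m V ` (V - cutK \<sigma> m V)) = card (\<sigma> ` V) - m"
proof -
  let ?s = "card (\<sigma> ` V)"
  let ?K = "cutK \<sigma> m V"
  have Rle: "\<And>a b. R a b \<Longrightarrow> a \<le> b" and Rsh: "\<And>a b c. R (a + c) (b + c) = R a b"
    using R by (auto simp: goodR_def)
  show "ideal V E ?K"
    unfolding ideal_def cutK_def using V(2) OSgD(3)[OF \<sigma>] Rle by fastforce
  obtain v1 where "v1 \<in> V" "\<sigma> v1 = 1" using OSg_hit[OF \<sigma>, of 1] m by auto
  then show "?K \<noteq> {}" using m unfolding cutK_def by auto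
  have im1: "cut1 \<sigma> m V ` ?K = {1..m}"
  proof
    show "cut1 \<sigma> m V ` ?K \<subseteq> {1..m}" using OSg_range[OF \<sigma>] by (auto simp: cut1_def cutK_def)
    show "{1..m} \<subseteq> cut1 \<sigma> m V ` ?K"
    proof
      fix j assume j: "j \<in> {1..m}"
      then obtain v where "v \<in> V" "\<sigma> v = j" using OSg_hit[OF \<sigma>, of j] m by auto
      then show "j \<in> cut1 \<sigma> m V ` ?K" using j by (auto simp: cut1_def cutK_def intro!: image_eqI[of _ _ v])
    qed
  qed
  have e1: "\<And>u v. (u, v) \<in> Er E ?K \<Longrightarrow> R (cut1 \<sigma> m V u) (cut1 \<sigma> m V v)"
    using OSgD(3)[OF \<sigma>] by (auto simp: Er_def cutK_def cut1_def)
  have z1: "\<And>v. v \<notin> ?K \<Longrightarrow> cut1 \<sigma> m V v = 0" by (auto simp: cut1_def cutK_def)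
  show "cut1 \<sigma> m V \<in> OSg R ?K (Er E ?K)" "card (cut1 \<sigma> m V ` ?K) = m"
    using OSgI[where V="cutK \<sigma> m V" and \<sigma>="cut1 \<sigma> m V" and s=m and E="Er E (cutK \<sigma> m V)" and R=R, OF z1 im1 e1] by auto
  have im2: "cut2 \<sigma> m V ` (V - ?K) = {1..?s - m}"
  proof
    show "cut2 \<sigma> m V ` (V - ?K) \<subseteq> {1..?s - m}" using OSg_range[OF \<sigma>] by (force simp: cut2_def cutK_def)
    show "{1..?s - m} \<subseteq> cut2 \<sigma> m V ` (V - ?K)"
    proof
      fix j assume j: "j \<in> {1..?s - m}"
      then have "1 \<le> j + m" "j + m \<le> ?s" using m by auto
      then obtain v where "v \<in> V" "\<sigma> v = j + m" using OSg_hit[OF \<sigma>, of "j + m"] by blast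
      then show "j \<in> cut2 \<sigma> m V ` (V - ?K)" using j by (auto simp: cut2_def cutK_def intro!: image_eqI[of _ _ v])
    qed
  qed
  have e2: "\<And>u v. (u, v) \<in> Er E (V - ?K) \<Longrightarrow> R (cut2 \<sigma> m V u) (cut2 \<sigma> m V v)"
  proof -
    fix u v assume uv: "(u, v) \<in> Er E (V - ?K)"
    then have "R (\<sigma> u) (\<sigma> v)" "m < \<sigma> u" "m < \<sigma> v" "u \<in> V" "v \<in> V"
      using OSgD(3)[OF \<sigma>] by (auto simp: Er_def cutK_def)
    then show "R (cut2 \<sigma> m V u) (cut2 \<sigma> m V v)"
      using Rsh[of "\<sigma> u - m" m "\<sigma> v - m"] by (simp add: cut2_def)
  qed
  have z2: "\<And>v. v \<notin> V - ?K \<Longrightarrow> cut2 \<sigma> m V v = 0" by (auto simp: cut2_def cutK_def)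
  show "cut2 \<sigma> m V \<in> OSg R (V - ?K) (Er E (V - ?K))" "card (cut2 \<sigma> m V ` (V - ?K)) = ?s - m"
    using OSgI[where V="V - cutK \<sigma> m V" and \<sigma>="cut2 \<sigma> m V" and s="?s - m" and E="Er E (V - cutK \<sigma> m V)" and R=R, OF z2 im2 e2] by auto
qed

lemma glue_cut:
  assumes \<sigma>: "\<sigma> \<in> OSg R V E" and m: "1 \<le> m" "m \<le> card (\<sigma> ` V)" and R: "goodR R"
    and V: "finite V" "E \<subseteq> V \<times> V"
  shows "glue (cutK \<sigma> m V) (cut1 \<sigma> m V) (cut2 \<sigma> m V) V = \<sigma>"
proof
  fix v
  have c: "card (cut1 \<sigma> m V ` cutK \<sigma> m V) = m" using cut_props[OF R V \<sigma> m] by simp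
  show "glue (cutK \<sigma> m V) (cut1 \<sigma> m V) (cut2 \<sigma> m V) V v = \<sigma> v"
    using OSgD(1)[OF \<sigma>, of v] unfolding glue_def c by (auto simp: cut1_def cut2_def cutK_def)
qed

lemma glue_props:
  assumes R: "goodR R" and V: "finite V" "E \<subseteq> V \<times> V" and K: "ideal V E K" "K \<noteq> {}"
    and \<sigma>1: "\<sigma>1 \<in> OSg R K (Er E K)" and \<sigma>2: "\<sigma>2 \<in> OSg R (V - K) (Er E (V - K))"
  shows "glue K \<sigma>1 \<sigma>2 V \<in> OSg R V E"
    "card (glue K \<sigma>1 \<sigma>2 V ` V) = card (\<sigma>1 ` K) + card (\<sigma>2 ` (V - K))"
    "1 \<le> card (\<sigma>1 ` K)"
    "cutK (glue K \<sigma>1 \<sigma>2 V) (card (\<sigma>1 ` K)) V = K"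
    "cut1 (glue K \<sigma>1 \<sigma>2 V) (card (\<sigma>1 ` K)) V = \<sigma>1"
    "cut2 (glue K \<sigma>1 \<sigma>2 V) (card (\<sigma>1 ` K)) V = \<sigma>2"
proof -
  let ?m = "card (\<sigma>1 ` K)" and ?s2 = "card (\<sigma>2 ` (V - K))" and ?g = "glue K \<sigma>1 \<sigma>2 V"
  have Rle: "\<And>a b. R a b \<Longrightarrow> a \<le> b" and Rlt: "\<And>a b. a < b \<Longrightarrow> R a b"
    and Rsh: "\<And>a b c. R (a + c) (b + c) = R a b"
    using R by (auto simp: goodR_def)
  have KV: "K \<subseteq> V" using K by (auto simp: ideal_def)
  have fK: "finite K" using KV V finite_subset by blast
  show m1: "1 \<le> ?m" using K(2) fK by (simp add: Suc_le_eq card_gt_0_iff)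
  have r1: "\<And>v. v \<in> K \<Longrightarrow> 1 \<le> \<sigma>1 v \<and> \<sigma>1 v \<le> ?m" using OSg_range[OF \<sigma>1] by blast
  have r2: "\<And>v. v \<in> V - K \<Longrightarrow> 1 \<le> \<sigma>2 v \<and> \<sigma>2 v \<le> ?s2" using OSg_range[OF \<sigma>2] by blast
  have im: "?g ` V = {1..?m + ?s2}"
  proof
    show "?g ` V \<subseteq> {1..?m + ?s2}" using r1 r2 by (force simp: glue_def)
    show "{1..?m + ?s2} \<subseteq> ?g ` V"
    proof
      fix j assume j: "j \<in> {1..?m + ?s2}"
      show "j \<in> ?g ` V"
      proof (cases "j \<le> ?m")
        case True
        then obtain v where "v \<in> K" "\<sigma>1 v = j" using OSg_hit[OF \<sigma>1, of j] j by auto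
        then show ?thesis using KV by (auto simp: glue_def intro!: image_eqI[of _ _ v])
      next
        case False
        have "1 \<le> j - ?m" "j - ?m \<le> ?s2" using False j by auto
        then obtain v where "v \<in> V - K" "\<sigma>2 v = j - ?m" using OSg_hit[OF \<sigma>2, of "j - ?m"] by blast
        then show ?thesis using False by (auto simp: glue_def intro!: image_eqI[of _ _ v])
      qed
    qed
  qed
  have z: "\<And>v. v \<notin> V \<Longrightarrow> ?g v = 0" using KV by (auto simp: glue_def)
  have e: "\<And>u v. (u, v) \<in> E \<Longrightarrow> R (?g u) (?g v)"
  proof -
    fix u v assume uv: "(u, v) \<in> E"
    then have uV: "u \<in> V" "v \<in> V" using V by auto
    show "R (?g u) (?g v)"
    proof (cases "v \<in> K")
      case True
      then have "u \<in> K" using K uv by (auto simp: ideal_def)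
      then show ?thesis using True OSgD(3)[OF \<sigma>1, of u v] uv by (auto simp: glue_def Er_def)
    next
      case vK: False
      show ?thesis
      proof (cases "u \<in> K")
        case True
        then show ?thesis using vK uV r1[of u] r2[of v] by (auto simp: glue_def intro!: Rlt)
      next
        case False
        then have "R (\<sigma>2 u) (\<sigma>2 v)" using vK uV uv OSgD(3)[OF \<sigma>2, of u v] by (auto simp: Er_def)
        then show ?thesis using False vK uV Rsh by (simp add: glue_def)
      qed
    qed
  qed
  show "?g \<in> OSg R V E" "card (?g ` V) = ?m + ?s2" using OSgI[where V=V and \<sigma>="?g" and s="?m + ?s2" and E=E and R=R, OF z im e] by auto
  show "cutK ?g ?m V = K" using r1 r2 KV by (force simp: cutK_def glue_def)
  show "cut1 ?g ?m V = \<sigma>1"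
  proof
    fix v show "cut1 ?g ?m V v = \<sigma>1 v"
      using r1[of v] r2[of v] OSgD(1)[OF \<sigma>1, of v] KV by (auto simp: cut1_def glue_def)
  qed
  show "cut2 ?g ?m V = \<sigma>2"
  proof
    fix v show "cut2 ?g ?m V v = \<sigma>2 v"
      using r1[of v] r2[of v] OSgD(1)[OF \<sigma>2, of v] KV by (auto simp: cut2_def glue_def)
  qed
qed




definition sw :: "nat set \<Rightarrow> (nat \<Rightarrow> 'a::ab_semigroup_add) \<Rightarrow> (nat \<Rightarrow> nat) \<Rightarrow> 'a list" where
  "sw V d \<sigma> = sigma_word V d (card (\<sigma> ` V)) \<sigma>"

lemma finite_OSg:
  assumes "finite V" shows "finite (OSg R V E)"
proof (rule finite_subset)
  show "OSg R V E \<subseteq> {f. \<forall>x. (x \<in> V \<longrightarrow> f x \<in> {0..card V}) \<and> (x \<notin> V \<longrightarrow> f x = 0)}"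
  proof (safe)
    fix \<sigma> x assume s: "\<sigma> \<in> OSg R V E"
    { assume "x \<in> V"
      then have "\<sigma> x \<le> card (\<sigma> ` V)" using OSg_range[OF s] by blast
      also have "\<dots> \<le> card V" using assms card_image_le by blast
      finally show "\<sigma> x \<in> {0..card V}" by simp }
    { assume "x \<notin> V" then show "\<sigma> x = 0" using OSgD(1)[OF s] by blast }
  qed
  show "finite {f. \<forall>x. (x \<in> V \<longrightarrow> f x \<in> {0..card V}) \<and> (x \<notin> V \<longrightarrow> f x = (0::nat))}"
    using assms by (intro finite_set_of_finite_funs) auto
qed

lemma edge_trancl:
  assumes "E \<subseteq> V \<times> V"
  shows "(\<forall>u\<in>V. \<forall>v\<in>V. forest_less E u v \<longrightarrow> \<sigma> u < (\<sigma> v::nat)) \<longleftrightarrow> (\<forall>(u,v)\<in>E. \<sigma> u < \<sigma> v)"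
proof
  assume "\<forall>u\<in>V. \<forall>v\<in>V. forest_less E u v \<longrightarrow> \<sigma> u < \<sigma> v"
  then show "\<forall>(u,v)\<in>E. \<sigma> u < \<sigma> v" using assms by (auto simp: forest_less_def)
next
  assume a: "\<forall>(u,v)\<in>E. \<sigma> u < \<sigma> v"
  { fix u v assume "(u, v) \<in> E\<^sup>+"
    then have "\<sigma> u < \<sigma> v"
      by (induction rule: trancl_induct) (use a in auto) }
  then show "\<forall>u\<in>V. \<forall>v\<in>V. forest_less E u v \<longrightarrow> \<sigma> u < \<sigma> v" by (auto simp: forest_less_def)
qed

lemma order_surjs_OSg:
  assumes "E \<subseteq> V \<times> V"
  shows "order_surjs V E s = {\<sigma> \<in> OSg (<) V E. card (\<sigma> ` V) = s}"
proof (intro set_eqI iffI)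
  fix \<sigma> assume "\<sigma> \<in> order_surjs V E s"
  then show "\<sigma> \<in> {\<sigma> \<in> OSg (<) V E. card (\<sigma> ` V) = s}"
    using edge_trancl[OF assms, of \<sigma>] unfolding order_surjs_def OSg_def by auto
next
  fix \<sigma> assume "\<sigma> \<in> {\<sigma> \<in> OSg (<) V E. card (\<sigma> ` V) = s}"
  then show "\<sigma> \<in> order_surjs V E s"
    using edge_trancl[OF assms, of \<sigma>] unfolding order_surjs_def OSg_def by auto
qed

lemma OSg_empty: "OSg R {} {} = {\<lambda>_. 0}"
  by (auto simp: OSg_def)

lemma arb_eq:
  assumes V: "finite V" "E \<subseteq> V \<times> V"
  shows "arb (V, E, d) = (\<Sum>\<sigma>\<in>OSg (<) V E. {#sw V d \<sigma>#})"
proof (cases "V = {}")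
  case True
  then have "E = {}" using V by auto
  then show ?thesis using True by (simp add: arb_def OSg_empty sw_def sigma_word_def)
next
  case False
  have U: "OSg (<) V E = (\<Union>s\<in>{1..card V}. order_surjs V E s)"
  proof -
    { fix \<sigma> assume s: "\<sigma> \<in> OSg (<) V E"
      have "card (\<sigma> ` V) \<le> card V" using V card_image_le by blast
      moreover have "1 \<le> card (\<sigma> ` V)" using False V by (simp add: Suc_le_eq card_gt_0_iff)
      ultimately have "\<exists>s\<in>{1..card V}. \<sigma> \<in> order_surjs V E s"
        using s order_surjs_OSg[OF V(2)] by auto }
    then show ?thesis using order_surjs_OSg[OF V(2)] by auto
  qed
  have "(\<Sum>\<sigma>\<in>OSg (<) V E. {#sw V d \<sigma>#}) = (\<Sum>s\<in>{1..card V}. \<Sum>\<sigma>\<in>order_surjs V E s. {#sw V d \<sigma>#})"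
    unfolding U
    by (rule sum.UNION_disjoint) (use finite_OSg[OF V(1)] order_surjs_OSg[OF V(2)] in auto)
  also have "\<dots> = (\<Sum>s\<in>{1..card V}. \<Sum>\<sigma>\<in>order_surjs V E s. {#sigma_word V d s \<sigma>#})"
    by (intro sum.cong refl) (auto simp: sw_def order_surjs_OSg[OF V(2)])
  finally show ?thesis using False by (simp add: arb_def)
qed

lemma sigma_word_cong:
  "(\<And>v. v \<in> V \<Longrightarrow> \<sigma> v = \<tau> v) \<Longrightarrow> sigma_word V d s \<sigma> = sigma_word V d s \<tau>"
  unfolding sigma_word_def by (intro map_cong refl arg_cong[where f="dsum d"]) auto

lemma length_sigma_word[simp]: "length (sigma_word V d s \<sigma>) = s"
  by (simp add: sigma_word_def)

lemma upt_shift: "[m+1..<s+1] = map (\<lambda>i. i + m) [1..<s-m+1]"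
  by (rule nth_equalityI) (auto simp del: upt_Suc)

lemma sigma_word_split:
  assumes "m \<le> s"
  shows "sigma_word V d s \<sigma> = sigma_word {v\<in>V. \<sigma> v \<le> m} d m \<sigma> @
           sigma_word {v\<in>V. m < \<sigma> v} d (s - m) (\<lambda>v. \<sigma> v - m)"
proof -
  have e: "[1..<s+1] = [1..<m+1] @ [m+1..<s+1]"
    using upt_add_eq_append[of 1 "m+1" "s-m"] assms by (simp del: upt_Suc)
  have "sigma_word V d s \<sigma> = map (\<lambda>j. dsum d {v\<in>V. \<sigma> v = j}) [1..<m+1] @
       map (\<lambda>j. dsum d {v\<in>V. \<sigma> v = j}) (map (\<lambda>i. i + m) [1..<s-m+1])"
    by (simp only: sigma_word_def e upt_shift map_append)
  also have "map (\<lambda>j. dsum d {v\<in>V. \<sigma> v = j}) [1..<m+1] = sigma_word {v\<in>V. \<sigma> v \<le> m} d m \<sigma>"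
    unfolding sigma_word_def by (intro map_cong refl arg_cong[where f="dsum d"]) auto
  also have "map (\<lambda>j. dsum d {v\<in>V. \<sigma> v = j}) (map (\<lambda>i. i + m) [1..<s-m+1])
      = sigma_word {v\<in>V. m < \<sigma> v} d (s - m) (\<lambda>v. \<sigma> v - m)"
    unfolding sigma_word_def by (auto intro!: map_cong arg_cong[where f="dsum d"])
  finally show ?thesis .
qed

lemma sw_cut:
  assumes R: "goodR R" and V: "finite V" "E \<subseteq> V \<times> V" and \<sigma>: "\<sigma> \<in> OSg R V E"
    and m: "1 \<le> m" "m \<le> card (\<sigma> ` V)"
  shows "sw V d \<sigma> = sw (cutK \<sigma> m V) d (cut1 \<sigma> m V) @ sw (V - cutK \<sigma> m V) d (cut2 \<sigma> m V)"
proof -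
  note cp = cut_props[OF R V \<sigma> m]
  have "sw V d \<sigma> = sigma_word {v\<in>V. \<sigma> v \<le> m} d m \<sigma> @
           sigma_word {v\<in>V. m < \<sigma> v} d (card (\<sigma> ` V) - m) (\<lambda>v. \<sigma> v - m)"
    unfolding sw_def using sigma_word_split m by blast
  also have "sigma_word {v\<in>V. \<sigma> v \<le> m} d m \<sigma> = sw (cutK \<sigma> m V) d (cut1 \<sigma> m V)"
    unfolding sw_def cp(4) unfolding cutK_def by (rule sigma_word_cong) (auto simp: cut1_def cutK_def)
  also have "sigma_word {v\<in>V. m < \<sigma> v} d (card (\<sigma> ` V) - m) (\<lambda>v. \<sigma> v - m)
      = sw (V - cutK \<sigma> m V) d (cut2 \<sigma> m V)"
  proof -
    have "{v\<in>V. m < \<sigma> v} = V - cutK \<sigma> m V" by (auto simp: cutK_def)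
    then show ?thesis unfolding sw_def cp(6) by (simp, intro sigma_word_cong) (auto simp: cut2_def cutK_def)
  qed
  finally show ?thesis .
qed

lemma length_sw: "length (sw V d \<sigma>) = card (\<sigma> ` V)"
  by (simp add: sw_def)

lemma wt_sw:
  assumes "finite K" "K \<noteq> {}" "\<sigma> \<in> OSg R K E"
  shows "wt (sw K d \<sigma>) = dsum d K"
proof -
  let ?m = "card (\<sigma> ` K)"
  let ?f = "\<lambda>j. dsum d {v\<in>K. \<sigma> v = j}"
  have m1: "1 \<le> ?m" using assms by (simp add: Suc_le_eq card_gt_0_iff)
  have "wt (sw K d \<sigma>) = dsum ?f {1..?m}"
  proof -
    have "{1..?m} = {1..<?m+1}" by auto
    then show ?thesis by (simp add: sw_def sigma_word_def dsum_def)
  qed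
  also have "\<dots> = dsum d (\<Union>j\<in>{1..?m}. {v\<in>K. \<sigma> v = j})"
  proof (rule dsum_UN[symmetric])
    show "finite {1..?m}" "{1..?m} \<noteq> {}" using m1 by auto
    show "disjoint_family_on (\<lambda>j. {v \<in> K. \<sigma> v = j}) {1..?m}" by (auto simp: disjoint_family_on_def)
    fix j assume "j \<in> {1..?m}"
    then show "finite {v \<in> K. \<sigma> v = j} \<and> {v \<in> K. \<sigma> v = j} \<noteq> {}"
      using assms OSg_hit[OF assms(3), of j] by auto
  qed
  also have "(\<Union>j\<in>{1..?m}. {v\<in>K. \<sigma> v = j}) = K" using OSg_range[OF assms(3)] by auto
  finally show ?thesis .
qed




lemma image_summ: "image_mset f (\<Sum>x\<in>#X. g x) = (\<Sum>x\<in>#X. image_mset f (g x))"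
  by (induction X) auto

lemma image_sum: "image_mset f (\<Sum>x\<in>A. g x) = (\<Sum>x\<in>A. image_mset f (g x))"
  by (induction A rule: infinite_finite_induct) auto

lemma qsh_Nil2[simp]: "qsh u [] = {#u#}"
  by (cases u) auto

lemma qsh_mm_add1: "qsh_mm (X + Y) Z = qsh_mm X Z + qsh_mm Y Z"
  by (simp add: qsh_mm_def)
lemma qsh_mm_add2: "qsh_mm X (Y + Z) = qsh_mm X Y + qsh_mm X Z"
  by (simp add: qsh_mm_def sum_mset.distrib)
lemma qsh_mm_empty1[simp]: "qsh_mm {#} Z = {#}" by (simp add: qsh_mm_def)
lemma qsh_mm_empty2[simp]: "qsh_mm Z {#} = {#}" by (simp add: qsh_mm_def)

lemma qsh_mm_sum1: "qsh_mm (\<Sum>x\<in>A. f x) Z = (\<Sum>x\<in>A. qsh_mm (f x) Z)"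
  by (induction A rule: infinite_finite_induct) (auto simp: qsh_mm_add1)
lemma qsh_mm_sum2: "qsh_mm Z (\<Sum>x\<in>A. f x) = (\<Sum>x\<in>A. qsh_mm Z (f x))"
  by (induction A rule: infinite_finite_induct) (auto simp: qsh_mm_add2)

lemma qsh_mm_Nil1[simp]: "qsh_mm {#[]#} Z = Z"
  by (induction Z) (auto simp: qsh_mm_def)
lemma qsh_mm_Nil2[simp]: "qsh_mm Z {#[]#} = Z"
  by (simp add: qsh_mm_def)

lemma qsh_mm_Cons:
  "qsh_mm (image_mset ((#) a) X) (image_mset ((#) b) Y) =
     image_mset ((#) a) (qsh_mm X (image_mset ((#) b) Y))
   + image_mset ((#) b) (qsh_mm (image_mset ((#) a) X) Y)
   + image_mset ((#) (a + b)) (qsh_mm X Y)"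
proof -
  have "qsh_mm (image_mset ((#) a) X) (image_mset ((#) b) Y) =
        (\<Sum>u\<in>#X. \<Sum>v\<in>#Y. qsh (a # u) (b # v))"
    by (simp add: qsh_mm_def multiset.map_comp comp_def)
  also have "\<dots> = (\<Sum>u\<in>#X. \<Sum>v\<in>#Y. image_mset ((#) a) (qsh u (b # v)))
      + (\<Sum>u\<in>#X. \<Sum>v\<in>#Y. image_mset ((#) b) (qsh (a # u) v))
      + (\<Sum>u\<in>#X. \<Sum>v\<in>#Y. image_mset ((#) (a + b)) (qsh u v))"
    by (simp add: sum_mset.distrib)
  also have "\<dots> = image_mset ((#) a) (qsh_mm X (image_mset ((#) b) Y))
   + image_mset ((#) b) (qsh_mm (image_mset ((#) a) X) Y)
   + image_mset ((#) (a + b)) (qsh_mm X Y)"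
    by (simp add: qsh_mm_def image_summ multiset.map_comp comp_def)
  finally show ?thesis .
qed

definition A1 :: "nat set \<Rightarrow> (nat \<times> nat) set \<Rightarrow> nat set set" where
  "A1 V E = {S. S \<subseteq> V \<and> S \<noteq> {} \<and> (\<forall>(u,v)\<in>E. v \<notin> S)}"

definition ind :: "nat set \<Rightarrow> nat \<Rightarrow> nat" where
  "ind S = (\<lambda>v. if v \<in> S then 1 else 0)"

lemma Er_sub: "Er E K \<subseteq> K \<times> K" by (auto simp: Er_def)
lemma Er_Er: "Y \<subseteq> X \<Longrightarrow> Er (Er E X) Y = Er E Y" by (auto simp: Er_def)

lemma finite_A1: "finite V \<Longrightarrow> finite (A1 V E)"
  by (rule finite_subset[of _ "Pow V"]) (auto simp: A1_def)

lemma ind_OSg: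
  assumes "S \<noteq> {}" "finite S" "\<forall>(u,v)\<in>E. v \<notin> S"
  shows "ind S \<in> OSg (<) S (Er E S)" "card (ind S ` S) = 1"
proof -
  have "ind S ` S = {1..1}" using assms by (auto simp: ind_def)
  moreover have "\<And>u v. (u, v) \<in> Er E S \<Longrightarrow> ind S u < ind S v" using assms(3) by (auto simp: Er_def)
  moreover have "\<And>v. v \<notin> S \<Longrightarrow> ind S v = 0" by (simp add: ind_def)
  ultimately show "ind S \<in> OSg (<) S (Er E S)" "card (ind S ` S) = 1"
    using OSgI[where \<sigma>="ind S" and V=S and s=1 and E="Er E S" and R="(<)"] by auto
qed

lemma sw_single:
  assumes "finite K" "K \<noteq> {}" "\<sigma> \<in> OSg R K E" "card (\<sigma> ` K) = 1"
  shows "sw K d \<sigma> = [dsum d K]"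
proof -
  obtain a where "sw K d \<sigma> = [a]" using length_sw[of K d \<sigma>] assms(4)
    by (metis Suc_length_conv length_0_conv One_nat_def)
  moreover have "wt (sw K d \<sigma>) = dsum d K" using wt_sw[OF assms(1-3)] .
  ultimately show ?thesis by simp
qed

lemma L1:
  assumes V: "finite V" "E \<subseteq> V \<times> V" "V \<noteq> {}"
  shows "arb (V, E, d) = (\<Sum>S\<in>A1 V E. image_mset ((#) (dsum d S)) (arb (V - S, Er E (V - S), d)))"
proof -
  let ?T = "Sigma (A1 V E) (\<lambda>S. OSg (<) (V - S) (Er E (V - S)))"
  have VV: "finite V" "E \<subseteq> V \<times> V" using V by auto
  have "arb (V, E, d) = (\<Sum>\<sigma>\<in>OSg (<) V E. {#sw V d \<sigma>#})" using arb_eq[OF VV] .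
  also have "\<dots> = (\<Sum>p\<in>?T. {#dsum d (fst p) # sw (V - fst p) d (snd p)#})"
  proof (rule sum.reindex_bij_witness[where j="\<lambda>\<sigma>. (cutK \<sigma> 1 V, cut2 \<sigma> 1 V)"
        and i="\<lambda>p. glue (fst p) (ind (fst p)) (snd p) V"])
    fix \<sigma> assume \<sigma>: "\<sigma> \<in> OSg (<) V E"
    have c1: "1 \<le> card (\<sigma> ` V)" using V by (simp add: Suc_le_eq card_gt_0_iff)
    note cp = cut_props[OF goodR_less VV \<sigma> order.refl c1]
    have ci: "cut1 \<sigma> 1 V = ind (cutK \<sigma> 1 V)"
    proof (rule ext)
      fix v show "cut1 \<sigma> 1 V v = ind (cutK \<sigma> 1 V) v"
        using OSg_range[OF \<sigma>, of v] by (auto simp: cut1_def ind_def cutK_def)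
    qed
    show "glue (fst (cutK \<sigma> 1 V, cut2 \<sigma> 1 V)) (ind (fst (cutK \<sigma> 1 V, cut2 \<sigma> 1 V)))
        (snd (cutK \<sigma> 1 V, cut2 \<sigma> 1 V)) V = \<sigma>"
      using glue_cut[OF \<sigma> order.refl c1 goodR_less VV] ci by simp
    have "cutK \<sigma> 1 V \<in> A1 V E"
    proof -
      { fix u v assume uv: "(u, v) \<in> E" "v \<in> cutK \<sigma> 1 V"
        then have "\<sigma> u < \<sigma> v" "1 \<le> \<sigma> u" "\<sigma> v \<le> 1"
          using OSgD(3)[OF \<sigma>] OSg_range[OF \<sigma>] VV(2) by (auto simp: cutK_def)
        then have False by simp }
      then show ?thesis using cp(2) by (auto simp: A1_def cutK_def)
    qed
    then show "(cutK \<sigma> 1 V, cut2 \<sigma> 1 V) \<in> ?T" using cp(5) by auto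
    have "sw V d \<sigma> = sw (cutK \<sigma> 1 V) d (cut1 \<sigma> 1 V) @ sw (V - cutK \<sigma> 1 V) d (cut2 \<sigma> 1 V)"
      using sw_cut[OF goodR_less VV \<sigma> order.refl c1] .
    moreover have "sw (cutK \<sigma> 1 V) d (cut1 \<sigma> 1 V) = [dsum d (cutK \<sigma> 1 V)]"
      using cp(2-4) VV(1) by (intro sw_single) (auto simp: cutK_def)
    ultimately show "{#dsum d (fst (cutK \<sigma> 1 V, cut2 \<sigma> 1 V)) #
        sw (V - fst (cutK \<sigma> 1 V, cut2 \<sigma> 1 V)) d (snd (cutK \<sigma> 1 V, cut2 \<sigma> 1 V))#} = {#sw V d \<sigma>#}"
      by simp
  next
    fix p assume p: "p \<in> ?T"
    obtain S \<tau> where pe: "p = (S, \<tau>)" by (cases p)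
    have S: "S \<subseteq> V" "S \<noteq> {}" "\<forall>(u,v)\<in>E. v \<notin> S" "\<tau> \<in> OSg (<) (V - S) (Er E (V - S))"
      using p pe by (auto simp: A1_def)
    have fS: "finite S" using S(1) VV(1) finite_subset by blast
    have id: "ideal V E S" using S by (auto simp: ideal_def)
    note i1 = ind_OSg[OF S(2) fS S(3)]
    note gp = glue_props[OF goodR_less VV id S(2) i1(1) S(4)]
    show "(cutK (glue (fst p) (ind (fst p)) (snd p) V) 1 V, cut2 (glue (fst p) (ind (fst p)) (snd p) V) 1 V) = p"
      using gp(4,6) i1(2) pe by simp
    show "glue (fst p) (ind (fst p)) (snd p) V \<in> OSg (<) V E" using gp(1) pe by simp
  qed
  also have "\<dots> = (\<Sum>S\<in>A1 V E. \<Sum>\<tau>\<in>OSg (<) (V - S) (Er E (V - S)). {#dsum d S # sw (V - S) d \<tau>#})"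
    by (subst sum.Sigma) (use finite_A1[OF VV(1)] finite_OSg VV(1) in \<open>auto simp: split_beta\<close>)
  also have "\<dots> = (\<Sum>S\<in>A1 V E. image_mset ((#) (dsum d S)) (arb (V - S, Er E (V - S), d)))"
  proof (intro sum.cong refl)
    fix S assume "S \<in> A1 V E"
    have "arb (V - S, Er E (V - S), d) = (\<Sum>\<tau>\<in>OSg (<) (V - S) (Er E (V - S)). {#sw (V - S) d \<tau>#})"
      using VV(1) by (intro arb_eq) (auto simp: Er_def)
    then show "(\<Sum>\<tau>\<in>OSg (<) (V - S) (Er E (V - S)). {#dsum d S # sw (V - S) d \<tau>#}) =
        image_mset ((#) (dsum d S)) (arb (V - S, Er E (V - S), d))"
      by (simp add: image_sum)
  qed
  finally show ?thesis .
qed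




lemma arb_empty: "arb ({}, E, d) = {#[]#}" by (simp add: arb_def)

lemma prod_arb:
  assumes "finite A" "finite B" "A \<inter> B = {}" "E \<subseteq> A \<times> A \<union> B \<times> B"
  shows "arb (A \<union> B, E, d) = qsh_mm (arb (A, Er E A, d)) (arb (B, Er E B, d))"
  using assms
proof (induction "card (A \<union> B)" arbitrary: A B E rule: less_induct)
  case less
  note fA = less.prems(1) and fB = less.prems(2) and dAB = less.prems(3) and EAB = less.prems(4)
  show ?case
  proof (cases "A = {} \<or> B = {}")
    case True
    then show ?thesis
    proof
      assume "A = {}"
      then have "Er E B = E" "Er E A = {}" using EAB by (auto simp: Er_def)
      then show ?thesis using \<open>A = {}\<close> by (simp add: arb_empty)
    next
      assume "B = {}"
      then have "Er E A = E" "Er E B = {}" using EAB by (auto simp: Er_def)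
      then show ?thesis using \<open>B = {}\<close> by (simp add: arb_empty)
    qed
  next
    case False
    then have Ane: "A \<noteq> {}" and Bne: "B \<noteq> {}" by auto
    define XA where "XA SA = arb (A - SA, Er E (A - SA), d)" for SA
    define XB where "XB SB = arb (B - SB, Er E (B - SB), d)" for SB
    define f where "f S = image_mset ((#) (dsum d S)) (arb ((A \<union> B) - S, Er E ((A \<union> B) - S), d))" for S
    let ?AA = "A1 A (Er E A)" and ?BB = "A1 B (Er E B)"
    have IHapp: "arb ((A \<union> B) - (SA \<union> SB), Er E ((A \<union> B) - (SA \<union> SB)), d) = qsh_mm (XA SA) (XB SB)"
      if "SA \<subseteq> A" "SB \<subseteq> B" "SA \<union> SB \<noteq> {}" for SA SB
    proof -
      have eq: "(A \<union> B) - (SA \<union> SB) = (A - SA) \<union> (B - SB)" using that dAB by auto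
      have "card ((A - SA) \<union> (B - SB)) < card (A \<union> B)"
        using that fA fB dAB by (intro psubset_card_mono) blast+
      then have "arb ((A - SA) \<union> (B - SB), Er E ((A - SA) \<union> (B - SB)), d) =
          qsh_mm (arb (A - SA, Er (Er E ((A - SA) \<union> (B - SB))) (A - SA), d))
                 (arb (B - SB, Er (Er E ((A - SA) \<union> (B - SB))) (B - SB), d))"
        using fA fB dAB EAB by (intro less.hyps) (auto simp: Er_def)
      also have "Er (Er E ((A - SA) \<union> (B - SB))) (A - SA) = Er E (A - SA)" by (rule Er_Er) auto
      also have "Er (Er E ((A - SA) \<union> (B - SB))) (B - SB) = Er E (B - SB)" by (rule Er_Er) auto
      finally show ?thesis unfolding eq XA_def XB_def .
    qed
    have EA: "Er E A \<subseteq> A \<times> A" and EB: "Er E B \<subseteq> B \<times> B" by (auto simp: Er_def)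
    have arbA: "arb (A, Er E A, d) = (\<Sum>SA\<in>?AA. image_mset ((#) (dsum d SA)) (XA SA))"
      unfolding XA_def using L1[OF fA EA Ane] by (simp add: Er_Er)
    have arbB: "arb (B, Er E B, d) = (\<Sum>SB\<in>?BB. image_mset ((#) (dsum d SB)) (XB SB))"
      unfolding XB_def using L1[OF fB EB Bne] by (simp add: Er_Er)
    have XA0: "XA {} = arb (A, Er E A, d)" and XB0: "XB {} = arb (B, Er E B, d)"
      by (simp_all add: XA_def XB_def)
    have fAA: "finite ?AA" and fBB: "finite ?BB" using finite_A1 fA fB by auto
    have AAs: "\<And>S. S \<in> ?AA \<Longrightarrow> S \<subseteq> A \<and> S \<noteq> {}" and BBs: "\<And>S. S \<in> ?BB \<Longrightarrow> S \<subseteq> B \<and> S \<noteq> {}"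
      by (auto simp: A1_def)
    have fin: "\<And>S. S \<in> ?AA \<Longrightarrow> finite S" "\<And>S. S \<in> ?BB \<Longrightarrow> finite S"
      using AAs BBs fA fB finite_subset by blast+
    have Adec: "A1 (A \<union> B) E = ?AA \<union> ?BB \<union> (\<lambda>(x, y). x \<union> y) ` (?AA \<times> ?BB)"
    proof (intro set_eqI iffI)
      fix S assume S: "S \<in> A1 (A \<union> B) E"
      have SA: "S \<inter> A = {} \<or> S \<inter> A \<in> ?AA" using S by (auto simp: A1_def Er_def)
      have SB: "S \<inter> B = {} \<or> S \<inter> B \<in> ?BB" using S by (auto simp: A1_def Er_def)
      have Su: "S = (S \<inter> A) \<union> (S \<inter> B)" using S by (auto simp: A1_def)
      show "S \<in> ?AA \<union> ?BB \<union> (\<lambda>(x, y). x \<union> y) ` (?AA \<times> ?BB)"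
      proof (cases "S \<inter> A = {}")
        case True
        then have "S \<inter> B \<in> ?BB" using SB S by (auto simp: A1_def)
        then show ?thesis using Su True by auto
      next
        case F1: False
        show ?thesis
        proof (cases "S \<inter> B = {}")
          case True
          then have "S \<inter> A \<in> ?AA" using SA F1 by auto
          then show ?thesis using Su True by auto
        next
          case False
          then have "(S \<inter> A, S \<inter> B) \<in> ?AA \<times> ?BB" using SA SB F1 by auto
          then show ?thesis using Su by (auto intro!: image_eqI[of _ _ "(S \<inter> A, S \<inter> B)"])
        qed
      qed
    next
      fix S assume "S \<in> ?AA \<union> ?BB \<union> (\<lambda>(x, y). x \<union> y) ` (?AA \<times> ?BB)"
      moreover have inA: "\<And>u v. (u, v) \<in> E \<Longrightarrow> v \<in> A \<Longrightarrow> (u, v) \<in> Er E A"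
        using EAB dAB by (auto simp: Er_def)
      moreover have inB: "\<And>u v. (u, v) \<in> E \<Longrightarrow> v \<in> B \<Longrightarrow> (u, v) \<in> Er E B"
        using EAB dAB by (auto simp: Er_def)
      ultimately show "S \<in> A1 (A \<union> B) E" unfolding A1_def by fastforce
    qed
    have inj: "inj_on (\<lambda>(x, y). x \<union> y) (?AA \<times> ?BB)"
    proof (rule inj_onI, clarify)
      fix x y x' y' assume "x \<in> ?AA" "y \<in> ?BB" "x' \<in> ?AA" "y' \<in> ?BB" "x \<union> y = x' \<union> y'"
      moreover then have "x \<subseteq> A" "x' \<subseteq> A" "y \<subseteq> B" "y' \<subseteq> B" using AAs BBs by auto
      ultimately show "x = x' \<and> y = y'" using dAB by blast
    qed
    have d1: "?AA \<inter> ?BB = {}" using AAs BBs dAB by blast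
    have d2: "(?AA \<union> ?BB) \<inter> (\<lambda>(x, y). x \<union> y) ` (?AA \<times> ?BB) = {}"
    proof -
      { fix S assume "S \<in> ?AA \<union> ?BB" "S \<in> (\<lambda>(x, y). x \<union> y) ` (?AA \<times> ?BB)"
        then obtain x y where "x \<in> ?AA" "y \<in> ?BB" "S = x \<union> y" by auto
        then have "S \<inter> A \<noteq> {}" "S \<inter> B \<noteq> {}" using AAs BBs by blast+
        with \<open>S \<in> ?AA \<union> ?BB\<close> have False using AAs BBs dAB by blast }
      then show ?thesis by blast
    qed
    have e1: "(\<Sum>S\<in>?AA. f S) = (\<Sum>SA\<in>?AA. image_mset ((#) (dsum d SA)) (qsh_mm (XA SA) (arb (B, Er E B, d))))"
    proof (intro sum.cong refl)
      fix SA assume "SA \<in> ?AA"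
      then show "f SA = image_mset ((#) (dsum d SA)) (qsh_mm (XA SA) (arb (B, Er E B, d)))"
        using IHapp[of SA "{}"] AAs[of SA] unfolding f_def XB0[symmetric] by simp
    qed
    have e2: "(\<Sum>S\<in>?BB. f S) = (\<Sum>SB\<in>?BB. image_mset ((#) (dsum d SB)) (qsh_mm (arb (A, Er E A, d)) (XB SB)))"
    proof (intro sum.cong refl)
      fix SB assume "SB \<in> ?BB"
      then show "f SB = image_mset ((#) (dsum d SB)) (qsh_mm (arb (A, Er E A, d)) (XB SB))"
        using IHapp[of "{}" SB] BBs[of SB] unfolding f_def XA0[symmetric] by simp
    qed
    have e3: "(\<Sum>p\<in>?AA \<times> ?BB. f (fst p \<union> snd p)) =
        (\<Sum>p\<in>?AA \<times> ?BB. image_mset ((#) (dsum d (fst p) + dsum d (snd p))) (qsh_mm (XA (fst p)) (XB (snd p))))"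
    proof (intro sum.cong refl)
      fix p assume p: "p \<in> ?AA \<times> ?BB"
      then have "dsum d (fst p \<union> snd p) = dsum d (fst p) + dsum d (snd p)"
      proof -
        have "fst p \<in> ?AA" "snd p \<in> ?BB" using p by auto
        then have "fst p \<subseteq> A" "snd p \<subseteq> B" "fst p \<noteq> {}" "snd p \<noteq> {}" using AAs BBs by blast+
        then show ?thesis using fin p dAB by (intro dsum_union) auto
      qed
      then show "f (fst p \<union> snd p) = image_mset ((#) (dsum d (fst p) + dsum d (snd p))) (qsh_mm (XA (fst p)) (XB (snd p)))"
        using IHapp[of "fst p" "snd p"] AAs BBs p unfolding f_def by auto
    qed
    have "arb (A \<union> B, E, d) = (\<Sum>S\<in>A1 (A \<union> B) E. f S)"
      unfolding f_def using fA fB EAB Ane by (intro L1) auto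
    also have "\<dots> = (\<Sum>S\<in>?AA. f S) + (\<Sum>S\<in>?BB. f S) + (\<Sum>p\<in>?AA \<times> ?BB. f (fst p \<union> snd p))"
    proof -
      have "(\<Sum>S\<in>(\<lambda>(x, y). x \<union> y) ` (?AA \<times> ?BB). f S) = (\<Sum>p\<in>?AA \<times> ?BB. f (fst p \<union> snd p))"
        by (subst sum.reindex[OF inj]) (simp add: split_beta)
      then show ?thesis unfolding Adec using fAA fBB d1 d2 by (simp add: sum.union_disjoint)
    qed
    also have "\<dots> = (\<Sum>SA\<in>?AA. image_mset ((#) (dsum d SA)) (qsh_mm (XA SA) (arb (B, Er E B, d)))) + (\<Sum>SB\<in>?BB. image_mset ((#) (dsum d SB)) (qsh_mm (arb (A, Er E A, d)) (XB SB))) + (\<Sum>p\<in>?AA \<times> ?BB. image_mset ((#) (dsum d (fst p) + dsum d (snd p))) (qsh_mm (XA (fst p)) (XB (snd p))))"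
      using e1 e2 e3 by simp
    also have "\<dots> = qsh_mm (arb (A, Er E A, d)) (arb (B, Er E B, d))" (is "?L = ?R")
    proof -
      have "?R = (\<Sum>SA\<in>?AA. \<Sum>SB\<in>?BB. qsh_mm (image_mset ((#) (dsum d SA)) (XA SA)) (image_mset ((#) (dsum d SB)) (XB SB)))"
        unfolding arbA arbB qsh_mm_sum1 qsh_mm_sum2 by (rule sum.swap)
      also have "\<dots> = (\<Sum>SA\<in>?AA. \<Sum>SB\<in>?BB. image_mset ((#) (dsum d SA)) (qsh_mm (XA SA) (image_mset ((#) (dsum d SB)) (XB SB))))
          + (\<Sum>SA\<in>?AA. \<Sum>SB\<in>?BB. image_mset ((#) (dsum d SB)) (qsh_mm (image_mset ((#) (dsum d SA)) (XA SA)) (XB SB)))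
          + (\<Sum>SA\<in>?AA. \<Sum>SB\<in>?BB. image_mset ((#) (dsum d SA + dsum d SB)) (qsh_mm (XA SA) (XB SB)))"
        by (simp add: qsh_mm_Cons sum.distrib)
      also have "(\<Sum>SA\<in>?AA. \<Sum>SB\<in>?BB. image_mset ((#) (dsum d SA)) (qsh_mm (XA SA) (image_mset ((#) (dsum d SB)) (XB SB))))
          = (\<Sum>SA\<in>?AA. image_mset ((#) (dsum d SA)) (qsh_mm (XA SA) (arb (B, Er E B, d))))"
        unfolding arbB by (simp add: qsh_mm_sum2 image_sum)
      also have "(\<Sum>SA\<in>?AA. \<Sum>SB\<in>?BB. image_mset ((#) (dsum d SB)) (qsh_mm (image_mset ((#) (dsum d SA)) (XA SA)) (XB SB)))
          = (\<Sum>SB\<in>?BB. image_mset ((#) (dsum d SB)) (qsh_mm (arb (A, Er E A, d)) (XB SB)))"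
        unfolding arbA by (subst sum.swap) (simp add: qsh_mm_sum1 image_sum)
      also have "(\<Sum>SA\<in>?AA. \<Sum>SB\<in>?BB. image_mset ((#) (dsum d SA + dsum d SB)) (qsh_mm (XA SA) (XB SB)))
          = (\<Sum>p\<in>?AA \<times> ?BB. image_mset ((#) (dsum d (fst p) + dsum d (snd p))) (qsh_mm (XA (fst p)) (XB (snd p))))"
        by (simp add: sum.cartesian_product split_beta)
      finally show ?thesis by simp
    qed
    finally show ?thesis .
  qed
qed




definition odot :: "('a list \<times> 'b::ab_semigroup_add list) multiset \<Rightarrow> ('a list \<times> 'b list) multiset \<Rightarrow> ('a list \<times> 'b list) multiset" where
  "odot A B = (\<Sum>p\<in>#A. \<Sum>q\<in>#B. image_mset (Pair (fst p @ fst q)) (qsh (snd p) (snd q)))"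

lemma odot_add1: "odot (X + Y) Z = odot X Z + odot Y Z" by (simp add: odot_def)
lemma odot_add2: "odot X (Y + Z) = odot X Y + odot X Z" by (simp add: odot_def sum_mset.distrib)
lemma odot_empty1[simp]: "odot {#} Z = {#}" by (simp add: odot_def)
lemma odot_empty2[simp]: "odot Z {#} = {#}" by (simp add: odot_def)
lemma odot_sum1: "odot (\<Sum>x\<in>A. f x) Z = (\<Sum>x\<in>A. odot (f x) Z)"
  by (induction A rule: infinite_finite_induct) (auto simp: odot_add1)
lemma odot_sum2: "odot Z (\<Sum>x\<in>A. f x) = (\<Sum>x\<in>A. odot Z (f x))"
  by (induction A rule: infinite_finite_induct) (auto simp: odot_add2)

lemma odot_single_image:
  "odot {#(l, p)#} (image_mset (Pair l2) X) = image_mset (Pair (l @ l2)) (qsh_mm {#p#} X)"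
  by (simp add: odot_def qsh_mm_def image_summ multiset.map_comp comp_def)

lemma odot_pair:
  "image_mset (Pair (a # l)) (qsh_mm X Y) = odot (image_mset (Pair [a]) X) (image_mset (Pair l) Y)"
  by (simp add: odot_def qsh_mm_def image_summ multiset.map_comp comp_def)

definition Dec :: "'a list \<Rightarrow> 'a list list set" where
  "Dec w = {ps. concat ps = w \<and> (\<forall>p\<in>set ps. p \<noteq> [])}"

lemma Dec_Nil: "Dec [] = {[]}" by (auto simp: Dec_def)

lemma Dec_Cons:
  assumes "w \<noteq> []"
  shows "Dec w = (\<lambda>(m, ps). take m w # ps) ` Sigma {1..length w} (\<lambda>m. Dec (drop m w))" (is "_ = ?R")
proof (intro set_eqI iffI)
  fix ps assume ps: "ps \<in> Dec w"
  then obtain p ps' where pe: "ps = p # ps'" using assms by (cases ps) (auto simp: Dec_def)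
  have "p \<noteq> []" "w = p @ concat ps'" "\<forall>q\<in>set ps'. q \<noteq> []" using ps pe by (auto simp: Dec_def)
  then show "ps \<in> ?R"
    using pe by (auto simp: Dec_def Suc_le_eq intro!: image_eqI[of _ _ "(length p, ps')"])
next
  fix ps assume "ps \<in> ?R"
  then show "ps \<in> Dec w" using assms by (auto simp: Dec_def)
qed

lemma Dec_inj:
  "inj_on (\<lambda>(m, ps). take m w # ps) (Sigma {1..length w} (\<lambda>m. Dec (drop m w)))"
proof (rule inj_onI)
  fix x y assume x: "x \<in> Sigma {1..length w} (\<lambda>m. Dec (drop m w))" and y: "y \<in> Sigma {1..length w} (\<lambda>m. Dec (drop m w))"
    and e: "(\<lambda>(m, ps). take m w # ps) x = (\<lambda>(m, ps). take m w # ps) y"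
  obtain m ps m' ps' where xy: "x = (m, ps)" "y = (m', ps')" by (cases x, cases y)
  have "m \<le> length w" "m' \<le> length w" "take m w = take m' w" "ps = ps'" using x y e xy by auto
  then have "m = m'" by (metis length_take min.absorb2)
  then show "x = y" using xy \<open>ps = ps'\<close> by simp
qed

lemma finite_Dec: "finite (Dec w)"
proof (induction "length w" arbitrary: w rule: less_induct)
  case less
  show ?case
  proof (cases "w = []")
    case True then show ?thesis by (simp add: Dec_Nil)
  next
    case False
    have "finite (Sigma {1..length w} (\<lambda>m. Dec (drop m w)))"
      using less False by (intro finite_SigmaI) auto
    then show ?thesis unfolding Dec_Cons[OF False] by simp
  qed
qed

lemma coprod_word_Dec:
  "coprod_word w = (\<Sum>ps\<in>Dec w. image_mset (Pair (map wt ps)) (qsh_list ps))"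
  by (simp add: coprod_word_def Dec_def)

lemma qsh_list_Cons: "qsh_list (p # ps) = qsh_mm {#p#} (qsh_list ps)"
  by (simp add: qsh_list_def)

lemma coprod_word_Nil: "coprod_word [] = {#([], [])#}"
  by (simp add: coprod_word_Dec Dec_Nil qsh_list_def)

lemma coprod_word_rec:
  assumes "w \<noteq> []"
  shows "coprod_word w = (\<Sum>m\<in>{1..length w}. odot {#([wt (take m w)], take m w)#} (coprod_word (drop m w)))"
proof -
  have "coprod_word w = (\<Sum>q\<in>Sigma {1..length w} (\<lambda>m. Dec (drop m w)).
      image_mset (Pair (map wt (take (fst q) w # snd q))) (qsh_list (take (fst q) w # snd q)))"
    unfolding coprod_word_Dec Dec_Cons[OF assms] by (subst sum.reindex[OF Dec_inj]) (simp add: split_beta)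
  also have "\<dots> = (\<Sum>m\<in>{1..length w}. \<Sum>ps\<in>Dec (drop m w).
      image_mset (Pair (map wt (take m w # ps))) (qsh_list (take m w # ps)))"
    by (subst sum.Sigma) (auto simp: finite_Dec split_beta)
  also have "\<dots> = (\<Sum>m\<in>{1..length w}. odot {#([wt (take m w)], take m w)#} (coprod_word (drop m w)))"
    by (simp add: coprod_word_Dec odot_sum2 odot_single_image qsh_list_Cons)
  finally show ?thesis .
qed




definition LH :: "nat set \<Rightarrow> (nat \<times> nat) set \<Rightarrow> (nat \<Rightarrow> 'a::ab_semigroup_add) \<Rightarrow> ('a list \<times> 'a list) multiset" where
  "LH V E d = (\<Sum>\<sigma>\<in>OSg (<) V E. coprod_word (sw V d \<sigma>))"

definition Ek :: "(nat \<Rightarrow> nat) \<Rightarrow> (nat \<times> nat) set \<Rightarrow> (nat \<times> nat) set" where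
  "Ek \<kappa> E = {(u, v) \<in> E. \<kappa> u = \<kappa> v}"

definition MH :: "nat set \<Rightarrow> (nat \<times> nat) set \<Rightarrow> (nat \<Rightarrow> 'a::ab_semigroup_add) \<Rightarrow> ('a list \<times> 'a list) multiset" where
  "MH V E d = (\<Sum>\<kappa>\<in>OSg (\<le>) V E. image_mset (Pair (sw V d \<kappa>)) (arb (V, Ek \<kappa> E, d)))"

definition XK :: "nat set \<Rightarrow> (nat \<times> nat) set \<Rightarrow> (nat \<Rightarrow> 'a::ab_semigroup_add) \<Rightarrow> ('a list \<times> 'a list) multiset" where
  "XK K E d = image_mset (Pair [dsum d K]) (arb (K, Er E K, d))"

definition IdNE :: "nat set \<Rightarrow> (nat \<times> nat) set \<Rightarrow> nat set set" where
  "IdNE V E = {K. ideal V E K \<and> K \<noteq> {}}"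

lemma finite_IdNE: "finite V \<Longrightarrow> finite (IdNE V E)"
  by (rule finite_subset[of _ "Pow V"]) (auto simp: IdNE_def ideal_def)

lemma XK_eq:
  assumes "finite K"
  shows "XK K E d = (\<Sum>\<sigma>\<in>OSg (<) K (Er E K). {#([dsum d K], sw K d \<sigma>)#})"
proof -
  have "arb (K, Er E K, d) = (\<Sum>\<sigma>\<in>OSg (<) K (Er E K). {#sw K d \<sigma>#})"
    using assms by (intro arb_eq) (auto simp: Er_def)
  then show ?thesis by (simp add: XK_def image_sum)
qed

lemma LH_rec:
  assumes V: "finite V" "E \<subseteq> V \<times> V" "V \<noteq> {}"
  shows "LH V E d = (\<Sum>K\<in>IdNE V E. odot (XK K E d) (LH (V - K) (Er E (V - K)) d))"
proof -
  have VV: "finite V" "E \<subseteq> V \<times> V" using V by auto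
  let ?S = "Sigma (OSg (<) V E) (\<lambda>\<sigma>. {1..card (\<sigma> ` V)})"
  let ?T = "Sigma (IdNE V E) (\<lambda>K. OSg (<) K (Er E K) \<times> OSg (<) (V - K) (Er E (V - K)))"
  have fK: "\<And>K. K \<in> IdNE V E \<Longrightarrow> finite K" using V(1) by (auto simp: IdNE_def ideal_def intro: finite_subset)
  have "LH V E d = (\<Sum>\<sigma>\<in>OSg (<) V E. \<Sum>m\<in>{1..card (\<sigma> ` V)}.
      odot {#([wt (take m (sw V d \<sigma>))], take m (sw V d \<sigma>))#} (coprod_word (drop m (sw V d \<sigma>))))"
    unfolding LH_def
  proof (intro sum.cong refl)
    fix \<sigma> assume "\<sigma> \<in> OSg (<) V E"
    have "length (sw V d \<sigma>) > 0" using V by (simp add: length_sw card_gt_0_iff)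
    then have "sw V d \<sigma> \<noteq> []" by auto
    then show "coprod_word (sw V d \<sigma>) = (\<Sum>m\<in>{1..card (\<sigma> ` V)}.
      odot {#([wt (take m (sw V d \<sigma>))], take m (sw V d \<sigma>))#} (coprod_word (drop m (sw V d \<sigma>))))"
      by (subst coprod_word_rec) (auto simp: length_sw)
  qed
  also have "\<dots> = (\<Sum>q\<in>?S. odot {#([wt (take (snd q) (sw V d (fst q)))], take (snd q) (sw V d (fst q)))#}
          (coprod_word (drop (snd q) (sw V d (fst q)))))"
    by (subst sum.Sigma) (auto simp: finite_OSg[OF V(1)] split_beta)
  also have "\<dots> = (\<Sum>b\<in>?T. odot {#([dsum d (fst b)], sw (fst b) d (fst (snd b)))#}
          (coprod_word (sw (V - fst b) d (snd (snd b)))))"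
  proof (rule sum.reindex_bij_witness[where j="\<lambda>q. (cutK (fst q) (snd q) V, cut1 (fst q) (snd q) V, cut2 (fst q) (snd q) V)"
        and i="\<lambda>b. (glue (fst b) (fst (snd b)) (snd (snd b)) V, card (fst (snd b) ` fst b))"])
    fix q assume q: "q \<in> ?S"
    obtain \<sigma> m where qe: "q = (\<sigma>, m)" by (cases q)
    have \<sigma>: "\<sigma> \<in> OSg (<) V E" and m: "1 \<le> m" "m \<le> card (\<sigma> ` V)" using q qe by auto
    note cp = cut_props[OF goodR_less VV \<sigma> m]
    show "(glue (fst (cutK (fst q) (snd q) V, cut1 (fst q) (snd q) V, cut2 (fst q) (snd q) V))
          (fst (snd (cutK (fst q) (snd q) V, cut1 (fst q) (snd q) V, cut2 (fst q) (snd q) V)))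
          (snd (snd (cutK (fst q) (snd q) V, cut1 (fst q) (snd q) V, cut2 (fst q) (snd q) V))) V,
         card (fst (snd (cutK (fst q) (snd q) V, cut1 (fst q) (snd q) V, cut2 (fst q) (snd q) V)) `
               fst (cutK (fst q) (snd q) V, cut1 (fst q) (snd q) V, cut2 (fst q) (snd q) V))) = q"
      using glue_cut[OF \<sigma> m goodR_less VV] cp(4) qe by simp
    show "(cutK (fst q) (snd q) V, cut1 (fst q) (snd q) V, cut2 (fst q) (snd q) V) \<in> ?T"
      using cp qe by (auto simp: IdNE_def)
    have sp: "sw V d \<sigma> = sw (cutK \<sigma> m V) d (cut1 \<sigma> m V) @ sw (V - cutK \<sigma> m V) d (cut2 \<sigma> m V)"
      using sw_cut[OF goodR_less VV \<sigma> m] .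
    have l1: "length (sw (cutK \<sigma> m V) d (cut1 \<sigma> m V)) = m" using cp(4) by (simp add: length_sw)
    have fc: "finite (cutK \<sigma> m V)" using V(1) by (simp add: cutK_def)
    have wt1: "wt (sw (cutK \<sigma> m V) d (cut1 \<sigma> m V)) = dsum d (cutK \<sigma> m V)"
      using wt_sw[OF fc cp(2) cp(3)] .
    show "odot {#([dsum d (fst (cutK (fst q) (snd q) V, cut1 (fst q) (snd q) V, cut2 (fst q) (snd q) V))],
            sw (fst (cutK (fst q) (snd q) V, cut1 (fst q) (snd q) V, cut2 (fst q) (snd q) V)) d
             (fst (snd (cutK (fst q) (snd q) V, cut1 (fst q) (snd q) V, cut2 (fst q) (snd q) V))))#}
         (coprod_word (sw (V - fst (cutK (fst q) (snd q) V, cut1 (fst q) (snd q) V, cut2 (fst q) (snd q) V)) d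
           (snd (snd (cutK (fst q) (snd q) V, cut1 (fst q) (snd q) V, cut2 (fst q) (snd q) V))))) =
        odot {#([wt (take (snd q) (sw V d (fst q)))], take (snd q) (sw V d (fst q)))#}
         (coprod_word (drop (snd q) (sw V d (fst q))))"
      using qe sp l1 wt1 by simp
  next
    fix b assume b: "b \<in> ?T"
    obtain K \<sigma>1 \<sigma>2 where be: "b = (K, \<sigma>1, \<sigma>2)" by (cases b) auto
    have K: "ideal V E K" "K \<noteq> {}" and s1: "\<sigma>1 \<in> OSg (<) K (Er E K)"
      and s2: "\<sigma>2 \<in> OSg (<) (V - K) (Er E (V - K))" using b be by (auto simp: IdNE_def)
    note gp = glue_props[OF goodR_less VV K s1 s2]
    show "(cutK (fst (glue (fst b) (fst (snd b)) (snd (snd b)) V, card (fst (snd b) ` fst b)))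
            (snd (glue (fst b) (fst (snd b)) (snd (snd b)) V, card (fst (snd b) ` fst b))) V,
          cut1 (fst (glue (fst b) (fst (snd b)) (snd (snd b)) V, card (fst (snd b) ` fst b)))
            (snd (glue (fst b) (fst (snd b)) (snd (snd b)) V, card (fst (snd b) ` fst b))) V,
          cut2 (fst (glue (fst b) (fst (snd b)) (snd (snd b)) V, card (fst (snd b) ` fst b)))
            (snd (glue (fst b) (fst (snd b)) (snd (snd b)) V, card (fst (snd b) ` fst b))) V) = b"
      using gp be by simp
    show "(glue (fst b) (fst (snd b)) (snd (snd b)) V, card (fst (snd b) ` fst b)) \<in> ?S"
      using gp be by simp
  qed
  also have "\<dots> = (\<Sum>K\<in>IdNE V E. \<Sum>\<sigma>1\<in>OSg (<) K (Er E K). \<Sum>\<sigma>2\<in>OSg (<) (V - K) (Er E (V - K)).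
        odot {#([dsum d K], sw K d \<sigma>1)#} (coprod_word (sw (V - K) d \<sigma>2)))"
  proof -
    have fT: "\<forall>K\<in>IdNE V E. finite (OSg (<) K (Er E K) \<times> OSg (<) (V - K) (Er E (V - K)))"
      using fK V(1) by (auto simp: finite_OSg)
    have "(\<Sum>b\<in>?T. odot {#([dsum d (fst b)], sw (fst b) d (fst (snd b)))#}
          (coprod_word (sw (V - fst b) d (snd (snd b))))) =
      (\<Sum>K\<in>IdNE V E. \<Sum>p\<in>OSg (<) K (Er E K) \<times> OSg (<) (V - K) (Er E (V - K)).
          odot {#([dsum d K], sw K d (fst p))#} (coprod_word (sw (V - K) d (snd p))))"
      using sum.Sigma[OF finite_IdNE[OF V(1)] fT, of "\<lambda>K p. odot {#([dsum d K], sw K d (fst p))#} (coprod_word (sw (V - K) d (snd p)))"]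
      by (simp add: split_beta)
    also have "\<dots> = (\<Sum>K\<in>IdNE V E. \<Sum>\<sigma>1\<in>OSg (<) K (Er E K). \<Sum>\<sigma>2\<in>OSg (<) (V - K) (Er E (V - K)).
        odot {#([dsum d K], sw K d \<sigma>1)#} (coprod_word (sw (V - K) d \<sigma>2)))"
      by (intro sum.cong refl) (simp add: sum.cartesian_product split_beta)
    finally show ?thesis .
  qed
  also have "\<dots> = (\<Sum>K\<in>IdNE V E. odot (XK K E d) (LH (V - K) (Er E (V - K)) d))"
    by (intro sum.cong refl) (simp add: XK_eq fK LH_def odot_sum1 odot_sum2; rule sum.swap)
  finally show ?thesis .
qed




lemma ind_OSg_le:
  assumes "S \<noteq> {}" "finite S"
  shows "ind S \<in> OSg (\<le>) S (Er E S)" "card (ind S ` S) = 1"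
proof -
  have "ind S ` S = {1..1}" using assms by (auto simp: ind_def)
  moreover have "\<And>u v. (u, v) \<in> Er E S \<Longrightarrow> ind S u \<le> ind S v" by (auto simp: Er_def ind_def)
  moreover have "\<And>v. v \<notin> S \<Longrightarrow> ind S v = 0" by (simp add: ind_def)
  ultimately show "ind S \<in> OSg (\<le>) S (Er E S)" "card (ind S ` S) = 1"
    using OSgI[where \<sigma>="ind S" and V=S and s=1 and E="Er E S" and R="(\<le>)"] by auto
qed

lemma MH_rec:
  assumes V: "finite V" "E \<subseteq> V \<times> V" "V \<noteq> {}"
  shows "MH V E d = (\<Sum>K\<in>IdNE V E. odot (XK K E d) (MH (V - K) (Er E (V - K)) d))"
proof -
  have VV: "finite V" "E \<subseteq> V \<times> V" using V by auto
  let ?T = "Sigma (IdNE V E) (\<lambda>K. OSg (\<le>) (V - K) (Er E (V - K)))"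
  let ?H = "\<lambda>b. odot (XK (fst b) E d) (image_mset (Pair (sw (V - fst b) d (snd b)))
                 (arb (V - fst b, Ek (snd b) (Er E (V - fst b)), d)))"
  have fK: "\<And>K. K \<in> IdNE V E \<Longrightarrow> finite K" using V(1) by (auto simp: IdNE_def ideal_def intro: finite_subset)
  have "MH V E d = (\<Sum>b\<in>?T. ?H b)"
    unfolding MH_def
  proof (rule sum.reindex_bij_witness[where j="\<lambda>\<kappa>. (cutK \<kappa> 1 V, cut2 \<kappa> 1 V)"
        and i="\<lambda>b. glue (fst b) (ind (fst b)) (snd b) V"])
    fix \<kappa> assume \<kappa>: "\<kappa> \<in> OSg (\<le>) V E"
    have c1: "1 \<le> card (\<kappa> ` V)" using V by (simp add: Suc_le_eq card_gt_0_iff)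
    note cp = cut_props[OF goodR_le VV \<kappa> order.refl c1]
    let ?K = "cutK \<kappa> 1 V" and ?k = "cut2 \<kappa> 1 V"
    have ci: "cut1 \<kappa> 1 V = ind ?K"
    proof (rule ext)
      fix v show "cut1 \<kappa> 1 V v = ind ?K v"
        using OSg_range[OF \<kappa>, of v] by (auto simp: cut1_def ind_def cutK_def)
    qed
    show "glue (fst (?K, ?k)) (ind (fst (?K, ?k))) (snd (?K, ?k)) V = \<kappa>"
      using glue_cut[OF \<kappa> order.refl c1 goodR_le VV] ci by simp
    show "(?K, ?k) \<in> ?T" using cp by (auto simp: IdNE_def)
    have fc: "finite ?K" using V(1) by (simp add: cutK_def)
    have KV: "?K \<subseteq> V" by (auto simp: cutK_def)
    have sweq: "sw V d \<kappa> = [dsum d ?K] @ sw (V - ?K) d ?k"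
      using sw_cut[OF goodR_le VV \<kappa> order.refl c1, where d=d] sw_single[OF fc cp(2) cp(3) cp(4), where d=d] by simp
    have rng: "\<And>v. v \<in> V \<Longrightarrow> 1 \<le> \<kappa> v" using OSg_range[OF \<kappa>] by blast
    have Esub: "Ek \<kappa> E \<subseteq> ?K \<times> ?K \<union> (V - ?K) \<times> (V - ?K)"
      using VV(2) by (auto simp: Ek_def cutK_def)
    have kk: "\<And>u v. u \<in> ?K \<Longrightarrow> v \<in> ?K \<Longrightarrow> \<kappa> u = \<kappa> v"
    proof -
      fix u v assume "u \<in> ?K" "v \<in> ?K"
      then have "u \<in> V" "v \<in> V" "\<kappa> u \<le> 1" "\<kappa> v \<le> 1" by (auto simp: cutK_def)
      then show "\<kappa> u = \<kappa> v" using rng[of u] rng[of v] by linarith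
    qed
    have E1: "Er (Ek \<kappa> E) ?K = Er E ?K"
      using kk by (auto simp: Er_def Ek_def)
    have E2: "Er (Ek \<kappa> E) (V - ?K) = Ek ?k (Er E (V - ?K))"
      by (auto simp: Er_def Ek_def cutK_def cut2_def)
    have VK: "?K \<union> (V - ?K) = V" using KV by blast
    have pa: "arb (?K \<union> (V - ?K), Ek \<kappa> E, d) = qsh_mm (arb (?K, Er (Ek \<kappa> E) ?K, d)) (arb (V - ?K, Er (Ek \<kappa> E) (V - ?K), d))"
      by (rule prod_arb[OF fc _ _ Esub]) (use V(1) in auto)
    have aeq: "arb (V, Ek \<kappa> E, d) = qsh_mm (arb (?K, Er E ?K, d)) (arb (V - ?K, Ek ?k (Er E (V - ?K)), d))"
      using pa unfolding VK E1 E2 .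
    show "?H (?K, ?k) = image_mset (Pair (sw V d \<kappa>)) (arb (V, Ek \<kappa> E, d))"
      unfolding aeq sweq by (simp add: odot_pair XK_def)
  next
    fix b assume b: "b \<in> ?T"
    obtain K \<kappa>' where be: "b = (K, \<kappa>')" by (cases b)
    have K: "ideal V E K" "K \<noteq> {}" and k: "\<kappa>' \<in> OSg (\<le>) (V - K) (Er E (V - K))"
      using b be by (auto simp: IdNE_def)
    have fKK: "finite K" using b be fK by auto
    note i1 = ind_OSg_le(1)[OF K(2) fKK, where E=E] ind_OSg_le(2)[OF K(2) fKK]
    note gp = glue_props[OF goodR_le VV K i1(1) k]
    show "(cutK (glue (fst b) (ind (fst b)) (snd b) V) 1 V, cut2 (glue (fst b) (ind (fst b)) (snd b) V) 1 V) = b"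
      using gp(4,6) i1(2) be by simp
    show "glue (fst b) (ind (fst b)) (snd b) V \<in> OSg (\<le>) V E" using gp(1) be by simp
  qed
  also have "\<dots> = (\<Sum>K\<in>IdNE V E. \<Sum>\<kappa>'\<in>OSg (\<le>) (V - K) (Er E (V - K)). ?H (K, \<kappa>'))"
    using sum.Sigma[OF finite_IdNE[OF V(1)], where B="\<lambda>K. OSg (\<le>) (V - K) (Er E (V - K))" and g="\<lambda>K k. ?H (K, k)"] V(1)
    by (simp add: finite_OSg split_beta)
  also have "\<dots> = (\<Sum>K\<in>IdNE V E. odot (XK K E d) (MH (V - K) (Er E (V - K)) d))"
    by (intro sum.cong refl) (simp add: MH_def odot_sum2)
  finally show ?thesis .
qed

lemma LH_MH:
  assumes "finite V" "E \<subseteq> V \<times> V"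
  shows "LH V E d = MH V E d"
  using assms
proof (induction "card V" arbitrary: V E rule: less_induct)
  case less
  show ?case
  proof (cases "V = {}")
    case True
    then have "E = {}" using less.prems by auto
    then show ?thesis using True
      by (simp add: LH_def MH_def OSg_empty sw_def sigma_word_def coprod_word_Nil arb_empty)
  next
    case False
    have "LH V E d = (\<Sum>K\<in>IdNE V E. odot (XK K E d) (LH (V - K) (Er E (V - K)) d))"
      by (rule LH_rec[OF less.prems False])
    also have "\<dots> = (\<Sum>K\<in>IdNE V E. odot (XK K E d) (MH (V - K) (Er E (V - K)) d))"
    proof (intro sum.cong refl arg_cong[where f="odot _"])
      fix K assume K: "K \<in> IdNE V E"
      then have "card (V - K) < card V" using less.prems
        by (intro psubset_card_mono) (auto simp: IdNE_def ideal_def)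
      then show "LH (V - K) (Er E (V - K)) d = MH (V - K) (Er E (V - K)) d"
        using less.prems by (intro less.hyps) (auto simp: Er_def)
    qed
    also have "\<dots> = MH V E d" by (rule MH_rec[OF less.prems False, symmetric])
    finally show ?thesis .
  qed
qed




definition blk :: "nat set set \<Rightarrow> nat \<Rightarrow> nat set" where
  "blk P v = \<Union>{B\<in>P. v \<in> B}"
definition kap :: "nat set set \<Rightarrow> (nat \<Rightarrow> nat) \<Rightarrow> nat set \<Rightarrow> nat \<Rightarrow> nat" where
  "kap P \<tau> V = (\<lambda>v. if v \<in> V then \<tau> (Min (blk P v)) else 0)"
definition Ec :: "(nat \<times> nat) set \<Rightarrow> nat set set \<Rightarrow> (nat \<times> nat) set" where
  "Ec E P = {(Min B, Min B') | B B'. B \<in> P \<and> B' \<in> P \<and> B \<noteq> B' \<and> (\<exists>u\<in>B. \<exists>v\<in>B'. (u, v) \<in> E)}"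
definition dcP :: "nat set \<Rightarrow> (nat \<Rightarrow> 'a::ab_semigroup_add) \<Rightarrow> nat set set \<Rightarrow> nat \<Rightarrow> 'a" where
  "dcP V d P = (\<lambda>x. dsum d {v\<in>V. \<exists>B\<in>P. v \<in> B \<and> Min B = x})"
definition EP :: "(nat \<times> nat) set \<Rightarrow> nat set set \<Rightarrow> (nat \<times> nat) set" where
  "EP E P = E \<inter> (\<Union>B\<in>P. B \<times> B)"

lemma contract_eq: "contract (V, E, d) P = (Min ` P, Ec E P, dcP V d P)"
  by (simp add: contract_def Ec_def dcP_def)
lemma subforest_eq: "subforest (V, E, d) P = (V, EP E P, d)"
  by (simp add: subforest_def EP_def)

definition Rel :: "nat set \<Rightarrow> (nat \<times> nat) set \<Rightarrow> (nat \<Rightarrow> nat) \<Rightarrow> (nat \<times> nat) set" where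
  "Rel V' E' \<kappa> = {(u, v). u \<in> V' \<and> v \<in> V' \<and> (u, v) \<in> (Ek \<kappa> E' \<union> (Ek \<kappa> E')\<inverse>)\<^sup>*}"


locale part =
  fixes V :: "nat set" and P :: "nat set set"
  assumes fin: "finite V" and pt: "partition_on V P"
begin

lemma pB: "B \<in> P \<Longrightarrow> finite B \<and> B \<noteq> {} \<and> B \<subseteq> V \<and> Min B \<in> B"
proof -
  assume B: "B \<in> P"
  then have "B \<subseteq> V" "B \<noteq> {}" using pt by (auto simp: partition_on_def)
  moreover then have "finite B" using fin finite_subset by blast
  ultimately show ?thesis using Min_in by blast
qed

lemma pU: "v \<in> V \<Longrightarrow> \<exists>B\<in>P. v \<in> B"
  using pt by (auto simp: partition_on_def)

lemma pD: "B \<in> P \<Longrightarrow> B' \<in> P \<Longrightarrow> v \<in> B \<Longrightarrow> v \<in> B' \<Longrightarrow> B = B'"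
  using pt by (auto simp: partition_on_def disjoint_def)

lemma blk_eq: "B \<in> P \<Longrightarrow> v \<in> B \<Longrightarrow> blk P v = B"
  using pD by (auto simp: blk_def)

lemma blk_in: "v \<in> V \<Longrightarrow> blk P v \<in> P \<and> v \<in> blk P v"
  using pU blk_eq by metis

lemma Min_inj: "B \<in> P \<Longrightarrow> B' \<in> P \<Longrightarrow> Min B = Min B' \<Longrightarrow> B = B'"
  using pB pD by metis

lemma finP: "finite P" using fin pt finite_elements by blast

end

context
  fixes V :: "nat set" and E :: "(nat \<times> nat) set" and P :: "nat set set" and \<tau> :: "nat \<Rightarrow> nat"
  assumes cov: "covering V E P" and fin: "finite V" and EV: "E \<subseteq> V \<times> V"
    and \<tau>: "\<tau> \<in> OSg (<) (Min ` P) (Ec E P)"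
begin

interpretation part V P using cov fin by unfold_locales (auto simp: covering_def)

lemma kap_blk: "B \<in> P \<Longrightarrow> v \<in> B \<Longrightarrow> kap P \<tau> V v = \<tau> (Min B)"
  using blk_eq pB by (auto simp: kap_def)

lemma kap_strict:
  assumes "(u, v) \<in> E" "B \<in> P" "B' \<in> P" "u \<in> B" "v \<in> B'" "B \<noteq> B'"
  shows "kap P \<tau> V u < kap P \<tau> V v"
proof -
  have "(Min B, Min B') \<in> Ec E P" using assms by (auto simp: Ec_def)
  then show ?thesis using OSgD(3)[OF \<tau>] kap_blk assms by simp
qed

lemma kap_image: "kap P \<tau> V ` V = \<tau> ` (Min ` P)"
proof
  show "kap P \<tau> V ` V \<subseteq> \<tau> ` (Min ` P)" using blk_in by (auto simp: kap_def)
  show "\<tau> ` (Min ` P) \<subseteq> kap P \<tau> V ` V"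
  proof
    fix y assume "y \<in> \<tau> ` (Min ` P)"
    then obtain B where B: "B \<in> P" "y = \<tau> (Min B)" by auto
    then have "Min B \<in> V" "kap P \<tau> V (Min B) = y" using pB kap_blk by auto
    then show "y \<in> kap P \<tau> V ` V" by force
  qed
qed

lemma kap_OSg: "kap P \<tau> V \<in> OSg (\<le>) V E"
proof (rule OSgI(1))
  show "\<And>v. v \<notin> V \<Longrightarrow> kap P \<tau> V v = 0" by (simp add: kap_def)
  show "kap P \<tau> V ` V = {1..card (\<tau> ` Min ` P)}" using kap_image OSgD(2)[OF \<tau>] by simp
  fix u v assume uv: "(u, v) \<in> E"
  then have "u \<in> V" "v \<in> V" using EV by auto
  then obtain B B' where "B \<in> P" "B' \<in> P" "u \<in> B" "v \<in> B'" using pU by blast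
  then show "kap P \<tau> V u \<le> kap P \<tau> V v" using kap_strict[OF uv] kap_blk by (cases "B = B'") force+
qed

lemma kap_Ek: "Ek (kap P \<tau> V) E = EP E P"
proof
  show "Ek (kap P \<tau> V) E \<subseteq> EP E P"
  proof clarify
    fix u v assume "(u, v) \<in> Ek (kap P \<tau> V) E"
    then have uv: "(u, v) \<in> E" "kap P \<tau> V u = kap P \<tau> V v" by (auto simp: Ek_def)
    then have "u \<in> V" "v \<in> V" using EV by auto
    then obtain B B' where B: "B \<in> P" "B' \<in> P" "u \<in> B" "v \<in> B'" using pU by blast
    then have "B = B'" using kap_strict[OF uv(1)] uv(2) by (metis less_irrefl)
    then show "(u, v) \<in> EP E P" using B uv by (auto simp: EP_def)
  qed
  show "EP E P \<subseteq> Ek (kap P \<tau> V) E" using kap_blk by (auto simp: EP_def Ek_def)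
qed

lemma EP_path: "(u, v) \<in> (EP E P \<union> (EP E P)\<inverse>)\<^sup>* \<Longrightarrow> B \<in> P \<Longrightarrow> u \<in> B \<Longrightarrow> v \<in> B"
proof (induction rule: rtrancl_induct)
  case base then show ?case by simp
next
  case (step y z)
  then have "y \<in> B" by simp
  from step(2) obtain B' where "B' \<in> P" "y \<in> B'" "z \<in> B'" by (auto simp: EP_def)
  then show ?case using pD[of B B' y] \<open>y \<in> B\<close> step(4) by auto
qed


lemma kap_Rel: "Rel V E (kap P \<tau> V) = {(x, y). \<exists>B\<in>P. x \<in> B \<and> y \<in> B}"
proof
  show "Rel V E (kap P \<tau> V) \<subseteq> {(x, y). \<exists>B\<in>P. x \<in> B \<and> y \<in> B}"
  proof clarify
    fix u v assume "(u, v) \<in> Rel V E (kap P \<tau> V)"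
    then have uv: "u \<in> V" "(u, v) \<in> (EP E P \<union> (EP E P)\<inverse>)\<^sup>*" by (auto simp: Rel_def kap_Ek)
    then show "\<exists>B\<in>P. u \<in> B \<and> v \<in> B" using blk_in[OF uv(1)] EP_path by blast
  qed
  show "{(x, y). \<exists>B\<in>P. x \<in> B \<and> y \<in> B} \<subseteq> Rel V E (kap P \<tau> V)"
  proof clarify
    fix x y B assume B: "B \<in> P" "x \<in> B" "y \<in> B"
    then have "(x, y) \<in> ((E \<inter> B \<times> B) \<union> (E \<inter> B \<times> B)\<inverse>)\<^sup>*" using cov by (auto simp: covering_def)
    moreover have "(E \<inter> B \<times> B) \<union> (E \<inter> B \<times> B)\<inverse> \<subseteq> EP E P \<union> (EP E P)\<inverse>" using B by (auto simp: EP_def)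
    ultimately have "(x, y) \<in> (EP E P \<union> (EP E P)\<inverse>)\<^sup>*" using rtrancl_mono by blast
    then show "(x, y) \<in> Rel V E (kap P \<tau> V)" using B pB by (auto simp: Rel_def kap_Ek)
  qed
qed

lemma kap_comp: "V // Rel V E (kap P \<tau> V) = P"
  unfolding kap_Rel using partition_on_eq_quotient[OF pt] .

lemma kap_tau: "(\<lambda>x. if x \<in> Min ` P then kap P \<tau> V x else 0) = \<tau>"
proof
  fix x show "(if x \<in> Min ` P then kap P \<tau> V x else 0) = \<tau> x"
    using kap_blk pB OSgD(1)[OF \<tau>, of x] by auto
qed

lemma kap_sw: "sw (Min ` P) (dcP V d P) \<tau> = sw V d (kap P \<tau> V)"
proof -
  let ?s = "card (\<tau> ` Min ` P)"
  have cs: "card (kap P \<tau> V ` V) = ?s" using kap_image by simp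
  let ?A = "\<lambda>x. {v\<in>V. \<exists>B\<in>P. v \<in> B \<and> Min B = x}"
  have AB: "\<And>B. B \<in> P \<Longrightarrow> ?A (Min B) = B"
  proof -
    fix B assume B: "B \<in> P"
    show "?A (Min B) = B"
    proof
      show "?A (Min B) \<subseteq> B" using Min_inj B by blast
      show "B \<subseteq> ?A (Min B)" using B pB by blast
    qed
  qed
  have "dsum (dcP V d P) {x \<in> Min ` P. \<tau> x = j} = dsum d {v\<in>V. kap P \<tau> V v = j}"
    if j: "j \<in> set [1..<?s+1]" for j
  proof -
    let ?I = "{x \<in> Min ` P. \<tau> x = j}"
    have "j \<in> {1..?s}" using j by auto
    then have "j \<in> \<tau> ` Min ` P" using OSgD(2)[OF \<tau>] by metis
    then have Ine: "?I \<noteq> {}" by auto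
    have "dsum d (\<Union>x\<in>?I. ?A x) = dsum (\<lambda>x. dsum d (?A x)) ?I"
    proof (rule dsum_UN)
      show "finite ?I" using finP by simp
      show "?I \<noteq> {}" by (rule Ine)
      show "disjoint_family_on ?A ?I"
        unfolding disjoint_family_on_def using pD by blast
      fix x assume "x \<in> ?I"
      then obtain B where "B \<in> P" "x = Min B" by auto
      then show "finite (?A x) \<and> ?A x \<noteq> {}" using AB pB by auto
    qed
    also have "dsum (\<lambda>x. dsum d (?A x)) ?I = dsum (dcP V d P) ?I" by (simp add: dcP_def)
    also have "(\<Union>x\<in>?I. ?A x) = {v\<in>V. kap P \<tau> V v = j}"
    proof
      show "(\<Union>x\<in>?I. ?A x) \<subseteq> {v\<in>V. kap P \<tau> V v = j}" using kap_blk by auto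
      show "{v\<in>V. kap P \<tau> V v = j} \<subseteq> (\<Union>x\<in>?I. ?A x)"
      proof
        fix v assume v: "v \<in> {v\<in>V. kap P \<tau> V v = j}"
        then have "blk P v \<in> P" "v \<in> blk P v" using blk_in by auto
        moreover then have "\<tau> (Min (blk P v)) = j" using v kap_blk by auto
        ultimately show "v \<in> (\<Union>x\<in>?I. ?A x)" using v by blast
      qed
    qed
    finally show ?thesis by simp
  qed
  then show ?thesis unfolding sw_def sigma_word_def cs by (intro map_cong refl) auto
qed

end


context
  fixes V :: "nat set" and E :: "(nat \<times> nat) set" and \<kappa> :: "nat \<Rightarrow> nat"
  assumes fin: "finite V" and EV: "E \<subseteq> V \<times> V" and \<kappa>: "\<kappa> \<in> OSg (\<le>) V E"
begin

lemma Rel_equiv: "equiv V (Rel V E \<kappa>)"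
proof (rule equivI)
  show "Rel V E \<kappa> \<subseteq> V \<times> V" by (auto simp: Rel_def)
  show "refl_on V (Rel V E \<kappa>)" by (auto simp: Rel_def refl_on_def)
  have s: "sym ((Ek \<kappa> E \<union> (Ek \<kappa> E)\<inverse>)\<^sup>*)" by (intro sym_rtrancl sym_Un_converse)
  show "sym (Rel V E \<kappa>)" using s by (auto simp: Rel_def sym_def)
  show "trans (Rel V E \<kappa>)" by (auto simp: Rel_def trans_def)
qed

lemma Rel_const: "(u, v) \<in> Rel V E \<kappa> \<Longrightarrow> \<kappa> u = \<kappa> v"
proof -
  assume "(u, v) \<in> Rel V E \<kappa>"
  then have "(u, v) \<in> (Ek \<kappa> E \<union> (Ek \<kappa> E)\<inverse>)\<^sup>*" by (simp add: Rel_def)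
  then show "\<kappa> u = \<kappa> v" by (induction rule: rtrancl_induct) (auto simp: Ek_def)
qed

lemma comp_part: "partition_on V (V // Rel V E \<kappa>)"
  by (rule partition_on_quotient[OF Rel_equiv])

interpretation part V "V // Rel V E \<kappa>" using fin comp_part by unfold_locales

lemma same_block: "B \<in> V // Rel V E \<kappa> \<Longrightarrow> u \<in> B \<Longrightarrow> v \<in> B \<Longrightarrow> (u, v) \<in> Rel V E \<kappa>"
proof -
  assume B: "B \<in> V // Rel V E \<kappa>" and u: "u \<in> B" and v: "v \<in> B"
  obtain x where x: "B = Rel V E \<kappa> `` {x}" using B by (auto elim!: quotientE)
  have sy: "sym (Rel V E \<kappa>)" and tr: "trans (Rel V E \<kappa>)" using Rel_equiv by (auto simp: equiv_def)
  have "(x, u) \<in> Rel V E \<kappa>" "(x, v) \<in> Rel V E \<kappa>" using x u v by auto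
  then have "(u, x) \<in> Rel V E \<kappa>" "(x, v) \<in> Rel V E \<kappa>" using sy by (auto dest: symD)
  then show "(u, v) \<in> Rel V E \<kappa>" using tr by (auto dest: transD)
qed

lemma block_closed: "B \<in> V // Rel V E \<kappa> \<Longrightarrow> u \<in> B \<Longrightarrow> (u, v) \<in> Rel V E \<kappa> \<Longrightarrow> v \<in> B"
proof -
  assume B: "B \<in> V // Rel V E \<kappa>" and u: "u \<in> B" and uv: "(u, v) \<in> Rel V E \<kappa>"
  obtain x where x: "B = Rel V E \<kappa> `` {x}" using B by (auto elim!: quotientE)
  have tr: "trans (Rel V E \<kappa>)" using Rel_equiv by (auto simp: equiv_def)
  have "(x, u) \<in> Rel V E \<kappa>" using x u by auto
  then have "(x, v) \<in> Rel V E \<kappa>" using tr uv by (auto dest: transD)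
  then show "v \<in> B" using x by auto
qed

lemma comp_cov: "covering V E (V // Rel V E \<kappa>)"
proof -
  let ?R = "Ek \<kappa> E \<union> (Ek \<kappa> E)\<inverse>"
  have conn: "(y, z) \<in> ((E \<inter> B \<times> B) \<union> (E \<inter> B \<times> B)\<inverse>)\<^sup>*"
    if B: "B \<in> V // Rel V E \<kappa>" and y: "y \<in> B" and z: "z \<in> B" for B y z
  proof -
    have yz: "(y, z) \<in> ?R\<^sup>*" using same_block[OF B y z] by (simp add: Rel_def)
    have yV: "y \<in> V" using pB[OF B] y by auto
    have "w \<in> B \<and> (y, w) \<in> ((E \<inter> B \<times> B) \<union> (E \<inter> B \<times> B)\<inverse>)\<^sup>*" if "(y, w) \<in> ?R\<^sup>*" for w
      using that
    proof (induction rule: rtrancl_induct)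
      case base then show ?case using y by simp
    next
      case (step w w')
      have w'V: "w' \<in> V" using step(2) EV by (auto simp: Ek_def)
      have "(y, w') \<in> ?R\<^sup>*" using step(1,2) by (rule rtrancl.rtrancl_into_rtrancl)
      then have "(y, w') \<in> Rel V E \<kappa>" using yV w'V by (auto simp: Rel_def)
      then have "w' \<in> B" using block_closed[OF B y] by blast
      moreover have "(w, w') \<in> (E \<inter> B \<times> B) \<union> (E \<inter> B \<times> B)\<inverse>"
        using step(2,3) \<open>w' \<in> B\<close> by (auto simp: Ek_def)
      ultimately show ?case using step(3) by (meson rtrancl.rtrancl_into_rtrancl)
    qed
    then show ?thesis using yz by blast
  qed
  then show ?thesis using comp_part by (auto simp: covering_def)
qed

definition tauk :: "nat \<Rightarrow> nat" where
  "tauk = (\<lambda>x. if x \<in> Min ` (V // Rel V E \<kappa>) then \<kappa> x else 0)"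

lemma blk_const: "v \<in> V \<Longrightarrow> \<kappa> (Min (blk (V // Rel V E \<kappa>) v)) = \<kappa> v"
proof -
  assume v: "v \<in> V"
  then have "blk (V // Rel V E \<kappa>) v \<in> V // Rel V E \<kappa>" "v \<in> blk (V // Rel V E \<kappa>) v" using blk_in by auto
  moreover have "Min (blk (V // Rel V E \<kappa>) v) \<in> blk (V // Rel V E \<kappa>) v" using pB calculation(1) by blast
  ultimately have "(Min (blk (V // Rel V E \<kappa>) v), v) \<in> Rel V E \<kappa>" using same_block by blast
  then show ?thesis by (rule Rel_const)
qed

lemma tauk_OSg: "tauk \<in> OSg (<) (Min ` (V // Rel V E \<kappa>)) (Ec E (V // Rel V E \<kappa>))"
proof (rule OSgI(1))
  let ?P = "V // Rel V E \<kappa>"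
  show "\<And>v. v \<notin> Min ` ?P \<Longrightarrow> tauk v = 0" by (simp add: tauk_def)
  have "tauk ` (Min ` ?P) = \<kappa> ` V"
  proof
    show "tauk ` (Min ` ?P) \<subseteq> \<kappa> ` V" using pB by (auto simp: tauk_def)
    show "\<kappa> ` V \<subseteq> tauk ` (Min ` ?P)"
    proof
      fix y assume "y \<in> \<kappa> ` V"
      then obtain v where v: "v \<in> V" "y = \<kappa> v" by auto
      then have "Min (blk ?P v) \<in> Min ` ?P" using blk_in by auto
      moreover have "tauk (Min (blk ?P v)) = y" using calculation blk_const[OF v(1)] v by (simp add: tauk_def)
      ultimately show "y \<in> tauk ` (Min ` ?P)" by (metis image_eqI)
    qed
  qed
  then show "tauk ` (Min ` ?P) = {1..card (\<kappa> ` V)}" using OSgD(2)[OF \<kappa>] by simp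
  fix a b assume "(a, b) \<in> Ec E ?P"
  then obtain B B' u v where BB: "a = Min B" "b = Min B'" "B \<in> ?P" "B' \<in> ?P" "B \<noteq> B'"
    "u \<in> B" "v \<in> B'" "(u, v) \<in> E" by (auto simp: Ec_def)
  have le: "\<kappa> u \<le> \<kappa> v" using OSgD(3)[OF \<kappa> BB(8)] .
  have ne: "\<kappa> u \<noteq> \<kappa> v"
  proof
    assume "\<kappa> u = \<kappa> v"
    then have "(u, v) \<in> Rel V E \<kappa>" using BB EV by (auto simp: Rel_def Ek_def)
    then have "v \<in> B" using block_closed BB by blast
    then show False using pD BB by blast
  qed
  have "Min B \<in> B" "Min B' \<in> B'" using pB BB by blast+
  then have "(Min B, u) \<in> Rel V E \<kappa>" "(Min B', v) \<in> Rel V E \<kappa>" using same_block BB by blast+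
  then have "\<kappa> (Min B) = \<kappa> u" "\<kappa> (Min B') = \<kappa> v" using Rel_const by blast+
  then show "tauk a < tauk b" using le ne BB by (auto simp: tauk_def)
qed

lemma kap_tauk: "kap (V // Rel V E \<kappa>) tauk V = \<kappa>"
proof
  fix v show "kap (V // Rel V E \<kappa>) tauk V v = \<kappa> v"
  proof (cases "v \<in> V")
    case True
    then have "Min (blk (V // Rel V E \<kappa>) v) \<in> Min ` (V // Rel V E \<kappa>)" using blk_in by auto
    then show ?thesis using True blk_const by (simp add: kap_def tauk_def)
  next
    case False then show ?thesis using OSgD(1)[OF \<kappa>] by (simp add: kap_def)
  qed
qed

end




lemma coprod_words_sum: "coprod_words (\<Sum>x\<in>A. f x) = (\<Sum>x\<in>A. coprod_words (f x))"
  using sum_comp_morphism[of coprod_words f A] by (simp add: coprod_words_def comp_def)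

lemma arb_tensor_sum: "arb_tensor (\<Sum>x\<in>A. f x) = (\<Sum>x\<in>A. arb_tensor (f x))"
  using sum_comp_morphism[of arb_tensor f A] by (simp add: arb_tensor_def comp_def)

lemma arb_tensor_single: "arb_tensor {#(F1, F2)#} = tensor (arb F1) (arb F2)"
  by (simp add: arb_tensor_def)

lemma tensor_single: "tensor {#a#} B = image_mset (Pair a) B"
  by (simp add: tensor_def)

lemma tensor_sum1: "tensor (\<Sum>x\<in>A. f x) B = (\<Sum>x\<in>A. tensor (f x) B)"
  using sum_comp_morphism[of "\<lambda>X. tensor X B" f A] by (simp add: tensor_def comp_def)

lemma LHS_eq:
  assumes "finite V" "E \<subseteq> V \<times> V"
  shows "coprod_words (arb (V, E, d)) = LH V E d"
  unfolding arb_eq[OF assms] coprod_words_sum by (simp add: LH_def coprod_words_def)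

lemma RHS_eq:
  assumes fin: "finite V" and EV: "E \<subseteq> V \<times> V"
  shows "arb_tensor (coprod_forest (V, E, d)) = MH V E d"
proof -
  let ?C = "{P. covering V E P}"
  let ?S = "Sigma ?C (\<lambda>P. OSg (<) (Min ` P) (Ec E P))"
  have finC: "finite ?C"
    by (rule finite_subset[OF _ finitely_many_partition_on[OF fin]]) (auto simp: covering_def)
  have finP: "\<And>P. P \<in> ?C \<Longrightarrow> finite P"
    using fin by (auto simp: covering_def intro: finite_elements)
  have "arb_tensor (coprod_forest (V, E, d)) =
      (\<Sum>P\<in>?C. tensor (arb (Min ` P, Ec E P, dcP V d P)) (arb (V, EP E P, d)))"
    by (simp add: coprod_forest_def arb_tensor_sum contract_eq subforest_eq arb_tensor_single)
  also have "\<dots> = (\<Sum>P\<in>?C. \<Sum>\<tau>\<in>OSg (<) (Min ` P) (Ec E P).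
        image_mset (Pair (sw (Min ` P) (dcP V d P) \<tau>)) (arb (V, EP E P, d)))"
  proof (intro sum.cong refl)
    fix P assume P: "P \<in> ?C"
    have ae: "arb (Min ` P, Ec E P, dcP V d P) = (\<Sum>\<tau>\<in>OSg (<) (Min ` P) (Ec E P). {#sw (Min ` P) (dcP V d P) \<tau>#})"
      using finP[OF P] by (intro arb_eq) (auto simp: Ec_def)
    show "tensor (arb (Min ` P, Ec E P, dcP V d P)) (arb (V, EP E P, d)) = (\<Sum>\<tau>\<in>OSg (<) (Min ` P) (Ec E P).
        image_mset (Pair (sw (Min ` P) (dcP V d P) \<tau>)) (arb (V, EP E P, d)))"
      unfolding ae tensor_sum1 tensor_single ..
  qed
  also have "\<dots> = (\<Sum>p\<in>?S. image_mset (Pair (sw (Min ` fst p) (dcP V d (fst p)) (snd p))) (arb (V, EP E (fst p), d)))"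
    using sum.Sigma[OF finC, where B="\<lambda>P. OSg (<) (Min ` P) (Ec E P)"
        and g="\<lambda>P \<tau>. image_mset (Pair (sw (Min ` P) (dcP V d P) \<tau>)) (arb (V, EP E P, d))"] finP
    by (simp add: finite_OSg split_beta)
  also have "\<dots> = MH V E d"
    unfolding MH_def
  proof (rule sum.reindex_bij_witness[where j="\<lambda>p. kap (fst p) (snd p) V"
        and i="\<lambda>\<kappa>. (V // Rel V E \<kappa>, tauk V E \<kappa>)"])
    fix p assume p: "p \<in> ?S"
    obtain P \<tau> where pe: "p = (P, \<tau>)" by (cases p)
    have cov: "covering V E P" and \<tau>: "\<tau> \<in> OSg (<) (Min ` P) (Ec E P)" using p pe by auto
    have tk: "tauk V E (kap P \<tau> V) = \<tau>"
      unfolding tauk_def[OF fin EV kap_OSg[OF cov fin EV \<tau>]] kap_comp[OF cov fin EV \<tau>] by (rule kap_tau[OF cov fin EV \<tau>])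
    show "(V // Rel V E (kap (fst p) (snd p) V), tauk V E (kap (fst p) (snd p) V)) = p"
      using kap_comp[OF cov fin EV \<tau>] tk pe by simp
    show "kap (fst p) (snd p) V \<in> OSg (\<le>) V E" using kap_OSg[OF cov fin EV \<tau>] pe by simp
    show "image_mset (Pair (sw V d (kap (fst p) (snd p) V))) (arb (V, Ek (kap (fst p) (snd p) V) E, d)) =
        image_mset (Pair (sw (Min ` fst p) (dcP V d (fst p)) (snd p))) (arb (V, EP E (fst p), d))"
      using kap_sw[OF cov fin EV \<tau>, where d=d] kap_Ek[OF cov fin EV \<tau>] pe by simp
  next
    fix \<kappa> assume \<kappa>: "\<kappa> \<in> OSg (\<le>) V E"
    show "kap (fst (V // Rel V E \<kappa>, tauk V E \<kappa>)) (snd (V // Rel V E \<kappa>, tauk V E \<kappa>)) V = \<kappa>"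
      using kap_tauk[OF fin EV \<kappa>] by simp
    show "(V // Rel V E \<kappa>, tauk V E \<kappa>) \<in> ?S"
      using comp_cov[OF fin EV \<kappa>] tauk_OSg[OF fin EV \<kappa>] by simp
  qed
  finally show ?thesis .
qed

theorem theorem5p1:
  fixes V :: "nat set" and E :: "(nat \<times> nat) set" and d :: "nat \<Rightarrow> 'a::ab_semigroup_add"
  assumes "is_forest V E"
  shows "\<forall>w1 w2. (of_nat (count (coprod_words (arb (V, E, d))) (w1, w2)) :: 'k::field)
                = of_nat (count (arb_tensor (coprod_forest (V, E, d))) (w1, w2))"
proof -
  have fin: "finite V" and EV: "E \<subseteq> V \<times> V" using assms by (auto simp: is_forest_def)
  have "coprod_words (arb (V, E, d)) = arb_tensor (coprod_forest (V, E, d))"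
  proof -
    have "coprod_words (arb (V, E, d)) = LH V E d" by (rule LHS_eq[OF fin EV])
    also have "\<dots> = MH V E d" by (rule LH_MH[OF fin EV])
    also have "\<dots> = arb_tensor (coprod_forest (V, E, d))" by (rule RHS_eq[OF fin EV, symmetric])
    finally show ?thesis .
  qed
  then show ?thesis by simp
qed



end
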